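(* Let $L=(a_1,\dots,a_N)$ be as in the context, with associated $\psi$, $\mathcal H_s$, $\mathrm{LB}_s$, $\widetilde{\mathbf b}$ and $\widehat H$. Let $K$ be a sequence of positive integers with $K_n=ab^n(1+o(1))$, where $a,b$ are positive reals with $\log_\psi b$ irrational. Then for every $s\in\mathbb{N}$ and $\mathbf b\in\mathcal H_s$, $$\lim_{n\to\infty}\frac{\#\{k\le n:\mathrm{LB}_s(K_k)=\mathbf b\}}{n}=\log_\psi\frac{\widetilde{\mathbf b}\cdot\widehat H}{\mathbf b\cdot\widehat H}.$$
   Context: Fix $N\ge2$ and $L=(a_1,\dots,a_N)\in\mathbb{N}_0^N$ with $a_1>0$. Let $\Theta=(a_1,\dots,a_N,a_1,\dots,a_N,\dots)$ (periodic), $\Theta|s=(\Theta(1),\dots,\Theta(s))$. Let $\mathcal H^\circ$ be the set of finite tuples of nonnegative integers defined recursively: $\epsilon$ of length $n$ (the empty tuple included) lies in $\mathcal H^\circ$ iff either $\epsilon=\Theta|n$, or there is $0\le s<n$ with $(\epsilon(1),\dots,\epsilon(s))=\Theta|s$, $\epsilon(s+1)<\Theta(s+1)$ and $(\epsilon(s+2),\dots,\epsilon(n))\in\mathcal H^\circ$. Let $\mathcal H=\{\epsilon\in\mathcal H^\circ:\epsilon(1)>0\}$. Let $H$ be given by $H_n=1+\sum_{k=1}^{n-1}a_kH_{n-k}$ ($1\le n\le N+1$) and $H_{n+N}=a_1H_{n+N-1}+\dots+a_{N-1}H_{n+1}+(1+a_N)H_n$; every $m\in\mathbb{N}$ has a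 unique expansion $m=\epsilon*H:=\sum_{k=1}^{M}\epsilon(k)H_{M-k+1}$ with $\epsilon\in\mathcal H$, $M=\mathrm{len}(\epsilon)$. $\mathrm{LB}_s(m)$: if $N\le s\le M$ it is $(\epsilon(1),\dots,\epsilon(s))$; if $s<N$ and $s\le M$ it is $(\epsilon(1),\dots,\epsilon(s),0,\dots,0)$ of length $N$; undefined if $s>M$. $\mathcal H_s$ is the finite set of values of $\mathrm{LB}_s$, listed $\mathbf b_1,\dots,\mathbf b_\ell$ in lexicographic order (equivalently, consecutive blocks satisfy $1+\mathbf b_k|s*H=\mathbf b_{k+1}|s*H$, where $|s$ truncates to length $s$). Exclusive block: if $s\ge N$, $s\equiv p\pmod N$, $0\le p<N$, then $\mathbf b_{\ell+1}$ has length $s$, its first $s-p$ entries are $\Theta|(s-p)$ except that the last of these (equal to $a_N$) is replaced by $1+a_N$, and its last $p$ entries are $0$; if $s<N$, $\mathbf b_{\ell+1}=(a_1,\dots,a_{N-1},1+a_N)$. For $\mathbf b=\mathbf b_k$ set $\widetilde{\mathbf b}=\mathbf b_{k+1}$. $\psi$ is the unique positive real zero of $x^N-\sum_{k=1}^{N-1}a_kx^{N-k}-(1+a_N)$, $\theta=\psi^{-1}$, and $\mathbf b\cdot\widehat H=\sum_k\mathbf b(k)\theta^{k-1}$. *)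

theory Defs
  imports Complex_Main
begin

text \<open>The parameter list L = (a_1,...,a_N) is a list of naturals; a_k = L ! (k-1).
  Tuples are lists, epsilon(k) = eps ! (k-1).\<close>


definition aco :: "nat list \<Rightarrow> nat \<Rightarrow> nat" where
  "aco L k = L ! (k - 1)"

definition theta_seq :: "nat list \<Rightarrow> nat \<Rightarrow> nat" where
  "theta_seq L k = L ! ((k - 1) mod length L)"

definition theta_pre :: "nat list \<Rightarrow> nat \<Rightarrow> nat list" where
  "theta_pre L s = map (theta_seq L) [1..<Suc s]"

inductive_set Hcirc :: "nat list \<Rightarrow> nat list set" for L where
  full: "theta_pre L n \<in> Hcirc L"
| step: "c < theta_seq L (Suc s) \<Longrightarrow> r \<in> Hcirc L \<Longrightarrow> theta_pre L s @ [c] @ r \<in> Hcirc L"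

definition Hadm :: "nat list \<Rightarrow> nat list set" where
  "Hadm L = {e \<in> Hcirc L. e \<noteq> [] \<and> hd e > 0}"

text \<open>Given xs = [H_1,...,H_m], compute H_(m+1).\<close>
definition Hnext :: "nat list \<Rightarrow> nat list \<Rightarrow> nat" where
  "Hnext L xs = (let N = length L; n = Suc (length xs) in
     if n \<le> N + 1 then 1 + (\<Sum>k=1..<n. aco L k * xs ! (n - k - 1))
     else (\<Sum>k=1..<N. aco L k * xs ! (n - k - 1)) + (1 + aco L N) * xs ! (n - N - 1))"

primrec Hlist :: "nat list \<Rightarrow> nat \<Rightarrow> nat list" where
  "Hlist L 0 = []"
| "Hlist L (Suc m) = Hlist L m @ [Hnext L (Hlist L m)]"

text \<open>H_n for n >= 1.\<close>
definition Hs :: "nat list \<Rightarrow> nat \<Rightarrow> nat" where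
  "Hs L n = Hlist L n ! (n - 1)"

definition evalH :: "nat list \<Rightarrow> nat list \<Rightarrow> nat" where
  "evalH L e = (\<Sum>k=1..length e. e ! (k - 1) * Hs L (length e - k + 1))"

definition expansion :: "nat list \<Rightarrow> nat \<Rightarrow> nat list" where
  "expansion L m = (THE e. e \<in> Hadm L \<and> evalH L e = m)"

text \<open>LB_s(m); None means undefined.\<close>
definition LB :: "nat list \<Rightarrow> nat \<Rightarrow> nat \<Rightarrow> nat list option" where
  "LB L s m = (let e = expansion L m; M = length e in
     if s > M then None
     else if length L \<le> s then Some (take s e)
     else Some (take s e @ replicate (length L - s) 0))"

definition Hblocks :: "nat list \<Rightarrow> nat \<Rightarrow> nat list set" where
  "Hblocks L s = {b. \<exists>m::nat. m \<ge> 1 \<and> LB L s m = Some b}"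

definition lexless :: "nat list \<Rightarrow> nat list \<Rightarrow> bool" where
  "lexless xs ys \<longleftrightarrow> (xs, ys) \<in> lexord {(x, y). x < y}"

definition exclusive_block :: "nat list \<Rightarrow> nat \<Rightarrow> nat list" where
  "exclusive_block L s = (let N = length L; p = s mod N in
     if N \<le> s then take (s - p - 1) (theta_pre L (s - p)) @ [1 + aco L N] @ replicate p 0
     else butlast L @ [1 + last L])"

definition succ_block :: "nat list \<Rightarrow> nat \<Rightarrow> nat list \<Rightarrow> nat list" where
  "succ_block L s b = (if \<exists>c \<in> Hblocks L s. lexless b c
     then (THE c. c \<in> Hblocks L s \<and> lexless b c \<and>
                  (\<forall>d \<in> Hblocks L s. lexless b d \<longrightarrow> \<not> lexless d c))
     else exclusive_block L s)"

definition psi :: "nat list \<Rightarrow> real" where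
  "psi L = (THE x. x > 0 \<and> x ^ length L - (\<Sum>k=1..<length L. real (aco L k) * x ^ (length L - k))
             - (1 + real (aco L (length L))) = 0)"

definition thetaR :: "nat list \<Rightarrow> real" where
  "thetaR L = inverse (psi L)"

definition dotH :: "nat list \<Rightarrow> nat list \<Rightarrow> real" where
  "dotH L b = (\<Sum>k=1..length b. real (b ! (k - 1)) * thetaR L ^ (k - 1))"

end

theory Submission
  imports Defs "HOL-Analysis.Kronecker_Approximation_Theorem"
begin

definition Gc :: "real \<Rightarrow> real \<Rightarrow> real \<Rightarrow> nat \<Rightarrow> nat" where
  "Gc \<gamma> \<delta> c n = card {k \<in> {1..n}. frac (real k * \<gamma> + \<delta>) < c}"

lemma card_int_shift:
  "card {k \<in> {1..n::nat}. Q (int k + t)} = card {i \<in> {1+t..int n + t}. Q i}"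
proof -
  have "{i \<in> {1+t..int n + t}. Q i} = (\<lambda>k. int k + t) ` {k \<in> {1..n::nat}. Q (int k + t)}"
  proof (rule set_eqI, rule iffI)
    fix i assume "i \<in> {i \<in> {1+t..int n + t}. Q i}"
    then show "i \<in> (\<lambda>k. int k + t) ` {k \<in> {1..n::nat}. Q (int k + t)}"
      by (intro image_eqI[of _ _ "nat (i - t)"]) auto
  qed auto
  moreover have "inj_on (\<lambda>k. int k + t) {k \<in> {1..n::nat}. Q (int k + t)}"
    by (auto simp: inj_on_def)
  ultimately show ?thesis by (simp add: card_image)
qed

lemma card_int_interval_cmp:
  fixes a b a' b' :: int
  shows "card {i \<in> {a..b}. Q i} \<le> card {i \<in> {a'..b'}. Q i} + nat (a' - a) + nat (b - b')"
proof -
  have "{i \<in> {a..b}. Q i} \<subseteq> {a..a'-1} \<union> {i \<in> {a'..b'}. Q i} \<union> {b'+1..b}" by auto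
  then have "card {i \<in> {a..b}. Q i} \<le> card ({a..a'-1} \<union> {i \<in> {a'..b'}. Q i} \<union> {b'+1..b})"
    by (intro card_mono) (auto intro: finite_subset[of _ "{a..b}"] finite_subset[of _ "{a'..b'}"])
  also have "\<dots> \<le> card {a..a'-1} + card {i \<in> {a'..b'}. Q i} + card {b'+1..b}"
    by (meson add_le_mono card_Un_le le_refl order_trans)
  also have "\<dots> = nat (a' - a) + card {i \<in> {a'..b'}. Q i} + nat (b - b')" by simp
  finally show ?thesis by simp
qed

lemma Gc_shift:
  fixes t :: int
  shows "\<bar>int (Gc \<gamma> (\<delta> + of_int t * \<gamma>) c n) - int (Gc \<gamma> \<delta> c n)\<bar> \<le> \<bar>t\<bar>"
proof -
  define Q where "Q = (\<lambda>i::int. frac (of_int i * \<gamma> + \<delta>) < c)"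
  have 1: "Gc \<gamma> (\<delta> + of_int t * \<gamma>) c n = card {i \<in> {1+t..int n + t}. Q i}"
  proof -
    have "Gc \<gamma> (\<delta> + of_int t * \<gamma>) c n = card {k \<in> {1..n}. Q (int k + t)}"
      unfolding Gc_def Q_def by (simp add: algebra_simps)
    then show ?thesis using card_int_shift by simp
  qed
  have 2: "Gc \<gamma> \<delta> c n = card {i \<in> {1..int n}. Q i}"
  proof -
    have "Gc \<gamma> \<delta> c n = card {k \<in> {1..n}. Q (int k + 0)}"
      unfolding Gc_def Q_def by (simp add: algebra_simps)
    then show ?thesis using card_int_shift[of n Q 0] by simp
  qed
  have a: "card {i \<in> {1+t..int n + t}. Q i} \<le> card {i \<in> {1..int n}. Q i} + nat (1 - (1+t)) + nat (int n + t - int n)"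
    by (rule card_int_interval_cmp)
  have b: "card {i \<in> {1..int n}. Q i} \<le> card {i \<in> {1+t..int n + t}. Q i} + nat (1+t - 1) + nat (int n - (int n + t))"
    by (rule card_int_interval_cmp)
  show ?thesis unfolding 1 2 using a b by linarith
qed

lemma Gc_int: "Gc \<gamma> (\<delta> + of_int m) c n = Gc \<gamma> \<delta> c n"
proof -
  have "frac (real k * \<gamma> + (\<delta> + of_int m)) = frac (real k * \<gamma> + \<delta>)" for k
  proof -
    have "real k * \<gamma> + (\<delta> + of_int m) = (real k * \<gamma> + \<delta>) + of_int m" by simp
    then show ?thesis by (simp only: frac_def) simp
  qed
  then show ?thesis unfolding Gc_def by simp
qed

lemma Gc_le: "Gc \<gamma> \<delta> c n \<le> n"
  unfolding Gc_def by (rule order_trans[OF card_mono[of "{1..n}"]]) auto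

lemma Gc_one: "Gc \<gamma> \<delta> 1 n = n"
proof -
  have "{k \<in> {1..n}. frac (real k * \<gamma> + \<delta>) < 1} = {1..n}" by (auto simp: frac_lt_1)
  then show ?thesis unfolding Gc_def by simp
qed

lemma frac_eqI_Ints: "a - b \<in> \<int> \<Longrightarrow> frac a = frac b"
proof -
  assume "a - b \<in> \<int>"
  then obtain m where m: "a - b = of_int m" by (auto elim: Ints_cases)
  then have "a = b + of_int m" by simp
  then show ?thesis by (simp add: frac_def)
qed

lemma small_frac:
  fixes \<gamma> e :: real
  assumes "\<gamma> \<notin> \<rat>" "e > 0"
  shows "\<exists>q::int. 0 < frac (of_int q * \<gamma>) \<and> frac (of_int q * \<gamma>) < e"
proof -
  obtain N :: nat where N: "N > 0" "1 / real N < e"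
    using assms(2) by (metis ex_inverse_of_nat_less inverse_eq_divide of_nat_0_less_iff)
  obtain h k where hk: "0 < k" "\<bar>of_int k * \<gamma> - of_int h\<bar> < 1/N"
    using Dirichlet_approx[OF N(1), of \<gamma>] by blast
  define d where "d = of_int k * \<gamma> - of_int h"
  have "d \<noteq> 0"
  proof
    assume "d = 0"
    then have "\<gamma> = of_int h / of_int k" using hk(1) unfolding d_def by (simp add: field_simps)
    then have "\<gamma> \<in> \<rat>" by simp
    with assms(1) show False by simp
  qed
  have dl: "\<bar>d\<bar> < e" using hk N unfolding d_def by linarith
  show ?thesis
  proof (cases "d > 0")
    case True
    have N1: "1 / real N \<le> 1" using N(1) by simp
    have "d < 1" using hk(2) N1 unfolding d_def by linarith
    have "of_int k * \<gamma> - d = of_int h" unfolding d_def by simp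
    then have "frac (of_int k * \<gamma>) = d"
      unfolding frac_unique_iff using True \<open>d < 1\<close> by (metis Ints_of_int less_le)
    then show ?thesis using True dl by (intro exI[of _ k]) simp
  next
    case False
    then have dn: "d < 0" using \<open>d \<noteq> 0\<close> by simp
    have "frac (of_int (-k) * \<gamma>) = - d"
    proof -
      have "of_int (-k) * \<gamma> - - d = of_int (- h)" unfolding d_def by simp
      moreover have "- d < 1"
      proof -
        have N1: "1 / real N \<le> 1" using N(1) by simp
        then show ?thesis using hk(2) unfolding d_def by linarith
      qed
      ultimately show ?thesis unfolding frac_unique_iff using dn by (simp del: of_int_minus)
    qed
    then show ?thesis using dn dl by (intro exI[of _ "-k"]) simp
  qed
qed

lemma tile_eq:
  fixes \<gamma> \<eta> y :: real
  assumes "\<eta> = frac (of_int q * \<gamma>)"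
  shows "frac (y - real j * \<eta>) = frac (y - of_int (int j * q) * \<gamma>)"
proof (rule frac_eqI_Ints)
  have "y - real j * \<eta> - (y - of_int (int j * q) * \<gamma>) = of_int (int j * \<lfloor>of_int q * \<gamma>\<rfloor>)"
    unfolding assms frac_def by (simp add: algebra_simps)
  then show "y - real j * \<eta> - (y - of_int (int j * q) * \<gamma>) \<in> \<int>" by (metis Ints_of_int)
qed

lemma Gc_tile:
  assumes "\<eta> = frac (of_int q * \<gamma>)" "j \<le> J"
  shows "real (Gc \<gamma> (\<delta> - real j * \<eta>) c n) \<le> real (Gc \<gamma> \<delta> c n) + real J * \<bar>of_int q\<bar>"
    and "real (Gc \<gamma> (\<delta> - real j * \<eta>) c n) \<ge> real (Gc \<gamma> \<delta> c n) - real J * \<bar>of_int q\<bar>"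
proof -
  have "Gc \<gamma> (\<delta> - real j * \<eta>) c n = Gc \<gamma> (\<delta> + of_int (- (int j * q)) * \<gamma>) c n"
  proof -
    have "frac (real k * \<gamma> + (\<delta> - real j * \<eta>)) = frac (real k * \<gamma> + (\<delta> + of_int (- (int j * q)) * \<gamma>))" for k
      using tile_eq[OF assms(1), of "real k * \<gamma> + \<delta>" j] by (simp add: algebra_simps)
    then show ?thesis unfolding Gc_def by simp
  qed
  moreover have "\<bar>int (Gc \<gamma> (\<delta> + of_int (- (int j * q)) * \<gamma>) c n) - int (Gc \<gamma> \<delta> c n)\<bar> \<le> \<bar>- (int j * q)\<bar>"
    by (rule Gc_shift)
  moreover have "\<bar>- (int j * q)\<bar> \<le> int J * \<bar>q\<bar>"
    using assms(2) by (simp add: abs_mult mult_right_mono)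
  ultimately have *: "\<bar>int (Gc \<gamma> (\<delta> - real j * \<eta>) c n) - int (Gc \<gamma> \<delta> c n)\<bar> \<le> int J * \<bar>q\<bar>"
    by simp
  have **: "\<bar>real (Gc \<gamma> (\<delta> - real j * \<eta>) c n) - real (Gc \<gamma> \<delta> c n)\<bar> \<le> real J * \<bar>of_int q\<bar>"
  proof -
    have "real_of_int \<bar>int (Gc \<gamma> (\<delta> - real j * \<eta>) c n) - int (Gc \<gamma> \<delta> c n)\<bar> \<le> real_of_int (int J * \<bar>q\<bar>)"
      using * by (simp only: of_int_le_iff)
    then show ?thesis by simp
  qed
  show "real (Gc \<gamma> (\<delta> - real j * \<eta>) c n) \<le> real (Gc \<gamma> \<delta> c n) + real J * \<bar>of_int q\<bar>"
    using ** by linarith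
  show "real (Gc \<gamma> (\<delta> - real j * \<eta>) c n) \<ge> real (Gc \<gamma> \<delta> c n) - real J * \<bar>of_int q\<bar>"
    using ** by linarith
qed

lemma Gc_upper:
  fixes \<gamma> \<eta> c \<delta> :: real
  assumes eta: "0 < \<eta>" "\<eta> = frac (of_int q * \<gamma>)" and c: "0 \<le> c" and J: "J = nat \<lceil>c / \<eta>\<rceil>"
  shows "real (Gc \<gamma> \<delta> c n) \<le> real J * (real (Gc \<gamma> \<delta> \<eta> n) + real J * \<bar>of_int q\<bar>)"
proof -
  have eta1: "\<eta> < 1" using eta(2) frac_lt_1 by simp
  define S where "S = (\<lambda>j::nat. {k \<in> {1..n}. frac (real k * \<gamma> + (\<delta> - real j * \<eta>)) < \<eta>})"
  have sub: "{k \<in> {1..n}. frac (real k * \<gamma> + \<delta>) < c} \<subseteq> (\<Union>j<J. S j)"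
  proof
    fix k assume k: "k \<in> {k \<in> {1..n}. frac (real k * \<gamma> + \<delta>) < c}"
    define y where "y = real k * \<gamma> + \<delta>"
    have fy: "frac y < c" using k y_def by simp
    define j where "j = nat \<lfloor>frac y / \<eta>\<rfloor>"
    have q0: "0 \<le> frac y / \<eta>" using eta by simp
    have j1: "real j \<le> frac y / \<eta>" unfolding j_def using q0 by linarith
    have j2: "frac y / \<eta> < real j + 1" unfolding j_def using q0 by linarith
    have A: "real j * \<eta> \<le> frac y" using j1 eta(1) by (simp add: field_simps)
    have B: "frac y < (real j + 1) * \<eta>" using j2 eta(1) by (simp add: field_simps)
    have "frac y / \<eta> < c / \<eta>" using fy eta(1) by (simp add: divide_strict_right_mono)
    then have "real j < real J" unfolding J using j1 by linarith
    then have jJ: "j < J" by simp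
    have "frac (y - real j * \<eta>) = frac y - real j * \<eta>"
      unfolding frac_unique_iff
    proof (intro conjI)
      have "y - real j * \<eta> - (frac y - real j * \<eta>) = of_int \<lfloor>y\<rfloor>" by (simp add: frac_def)
      then show "y - real j * \<eta> - (frac y - real j * \<eta>) \<in> \<int>" by (metis Ints_of_int)
      show "0 \<le> frac y - real j * \<eta>" using A by simp
      show "frac y - real j * \<eta> < 1" using B eta1 by (simp add: algebra_simps)
    qed
    then have "frac (y - real j * \<eta>) < \<eta>" using B by (simp add: algebra_simps)
    then have "k \<in> S j" using k unfolding S_def y_def by (simp add: algebra_simps)
    then show "k \<in> (\<Union>j<J. S j)" using jJ by blast
  qed
  have "Gc \<gamma> \<delta> c n \<le> card (\<Union>j<J. S j)"
    unfolding Gc_def by (rule card_mono[OF _ sub]) (auto simp: S_def)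
  also have "\<dots> \<le> (\<Sum>j<J. card (S j))" by (rule card_UN_le) simp
  finally have "real (Gc \<gamma> \<delta> c n) \<le> (\<Sum>j<J. real (card (S j)))"
    by (metis of_nat_le_iff of_nat_sum)
  also have "\<dots> \<le> (\<Sum>j<J. real (Gc \<gamma> \<delta> \<eta> n) + real J * \<bar>of_int q\<bar>)"
  proof (rule sum_mono)
    fix j assume "j \<in> {..<J}"
    then have "j \<le> J" by simp
    have "card (S j) = Gc \<gamma> (\<delta> - real j * \<eta>) \<eta> n" unfolding S_def Gc_def by simp
    then show "real (card (S j)) \<le> real (Gc \<gamma> \<delta> \<eta> n) + real J * \<bar>of_int q\<bar>"
      using Gc_tile(1)[OF eta(2) \<open>j \<le> J\<close>, of \<delta> \<eta> n] by simp
  qed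
  also have "\<dots> = real J * (real (Gc \<gamma> \<delta> \<eta> n) + real J * \<bar>of_int q\<bar>)" by simp
  finally show ?thesis .
qed

lemma Gc_lower:
  fixes \<gamma> \<eta> c \<delta> :: real
  assumes eta: "0 < \<eta>" "\<eta> = frac (of_int q * \<gamma>)" and c: "c \<le> 1" and J: "J = nat \<lfloor>c / \<eta>\<rfloor>"
  shows "real J * (real (Gc \<gamma> \<delta> \<eta> n) - real J * \<bar>of_int q\<bar>) \<le> real (Gc \<gamma> \<delta> c n)"
proof -
  define S where "S = (\<lambda>j::nat. {k \<in> {1..n}. frac (real k * \<gamma> + (\<delta> - real j * \<eta>)) < \<eta>})"
  have Jbound: "(real j + 1) * \<eta> \<le> c" if "j < J" for j
  proof -
    have "0 < \<lfloor>c / \<eta>\<rfloor>"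
    proof (rule ccontr)
      assume "\<not> 0 < \<lfloor>c / \<eta>\<rfloor>"
      then have "J = 0" unfolding J by (simp only: not_less nat_le_0)
      then show False using that by simp
    qed
    then have "real J = of_int \<lfloor>c / \<eta>\<rfloor>" unfolding J by simp
    also have "\<dots> \<le> c / \<eta>" by (rule of_int_floor_le)
    finally have "real j + 1 \<le> c / \<eta>" using that by linarith
    then show ?thesis using eta(1) by (simp add: field_simps)
  qed
  have key: "real j * \<eta> \<le> frac (real k * \<gamma> + \<delta>) \<and> frac (real k * \<gamma> + \<delta>) < (real j + 1) * \<eta>"
    if "k \<in> S j" "j < J" for j k
  proof -
    define y where "y = real k * \<gamma> + \<delta>"
    define w where "w = frac (y - real j * \<eta>)"
    have w: "w < \<eta>" using that(1) unfolding S_def w_def y_def by (simp add: algebra_simps)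
    have "(real j + 1) * \<eta> \<le> c" by (rule Jbound[OF that(2)])
    then have le1: "w + real j * \<eta> < 1" using w c by (simp add: algebra_simps)
    have "frac y = w + real j * \<eta>"
      unfolding frac_unique_iff
    proof (intro conjI)
      have "y - (w + real j * \<eta>) = of_int \<lfloor>y - real j * \<eta>\<rfloor>" unfolding w_def frac_def by simp
      then show "y - (w + real j * \<eta>) \<in> \<int>" by (metis Ints_of_int)
      show "0 \<le> w + real j * \<eta>" unfolding w_def using eta(1) by simp
      show "w + real j * \<eta> < 1" by (rule le1)
    qed
    then show ?thesis using w unfolding y_def w_def by (simp add: algebra_simps)
  qed
  have inS: "k \<in> S j \<Longrightarrow> j < J \<Longrightarrow> frac (real k * \<gamma> + \<delta>) < c" for k j
  proof -
    assume a: "k \<in> S j" "j < J"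
    have "(real j + 1) * \<eta> \<le> c" by (rule Jbound[OF a(2)])
    then show ?thesis using key[OF a] by linarith
  qed
  have sub: "(\<Union>j<J. S j) \<subseteq> {k \<in> {1..n}. frac (real k * \<gamma> + \<delta>) < c}"
    using inS by (auto simp: S_def)
  have disj: "S i \<inter> S j = {}" if "i \<in> {..<J}" "j \<in> {..<J}" "i \<noteq> j" for i j
  proof (rule ccontr)
    assume "S i \<inter> S j \<noteq> {}"
    then obtain k where "k \<in> S i" "k \<in> S j" by blast
    from key[OF this(1)] key[OF this(2)] that have
      "real i * \<eta> < (real j + 1) * \<eta>" "real j * \<eta> < (real i + 1) * \<eta>" by auto
    then have "real i < real j + 1" "real j < real i + 1" using eta(1)
      by (simp_all add: mult_less_cancel_right)
    then show False using that(3) by linarith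
  qed
  have "(\<Sum>j<J. card (S j)) = card (\<Union>j<J. S j)"
  proof (rule card_UN_disjoint[symmetric])
    show "\<forall>j\<in>{..<J}. finite (S j)" unfolding S_def by simp
  qed (simp_all add: disj)
  also have "\<dots> \<le> Gc \<gamma> \<delta> c n"
    unfolding Gc_def by (rule card_mono[OF _ sub]) auto
  finally have "(\<Sum>j<J. real (card (S j))) \<le> real (Gc \<gamma> \<delta> c n)"
    by (metis of_nat_le_iff of_nat_sum)
  moreover have "(\<Sum>j<J. real (Gc \<gamma> \<delta> \<eta> n) - real J * \<bar>of_int q\<bar>) \<le> (\<Sum>j<J. real (card (S j)))"
  proof (rule sum_mono)
    fix j assume "j \<in> {..<J}"
    then have "j \<le> J" by simp
    have "card (S j) = Gc \<gamma> (\<delta> - real j * \<eta>) \<eta> n" unfolding S_def Gc_def by simp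
    then show "real (Gc \<gamma> \<delta> \<eta> n) - real J * \<bar>of_int q\<bar> \<le> real (card (S j))"
      using Gc_tile(2)[OF eta(2) \<open>j \<le> J\<close>, of \<delta> \<eta> n] by simp
  qed
  ultimately show ?thesis by simp
qed

lemma nat_ceiling_bounds:
  fixes x :: real assumes "0 \<le> x" shows "x \<le> real (nat \<lceil>x\<rceil>) \<and> real (nat \<lceil>x\<rceil>) < x + 1"
proof -
  have "0 \<le> \<lceil>x\<rceil>" using assms by simp
  then have "real (nat \<lceil>x\<rceil>) = of_int \<lceil>x\<rceil>" by simp
  then show ?thesis by (simp add: ceiling_correct) linarith
qed

lemma nat_floor_bounds:
  fixes x :: real assumes "0 \<le> x" shows "real (nat \<lfloor>x\<rfloor>) \<le> x \<and> x < real (nat \<lfloor>x\<rfloor>) + 1"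
proof -
  have "0 \<le> \<lfloor>x\<rfloor>" using assms by simp
  then have "real (nat \<lfloor>x\<rfloor>) = of_int \<lfloor>x\<rfloor>" by simp
  then show ?thesis by (simp add: floor_correct)
qed

theorem equidist:
  fixes \<gamma> \<delta> c :: real
  assumes irr: "\<gamma> \<notin> \<rat>" and c0: "0 \<le> c" and c1: "c \<le> 1"
  shows "(\<lambda>n. real (Gc \<gamma> \<delta> c n) / real n) \<longlonglongrightarrow> c"
proof (rule order_tendstoI)
  fix a assume a: "a < c"
  define e where "e = min (1/2) ((c - a)/4)"
  have e0: "e > 0" using a unfolding e_def by simp
  obtain q where q: "0 < frac (of_int q * \<gamma>)" "frac (of_int q * \<gamma>) < e"
    using small_frac[OF irr e0] by blast
  define \<eta> where "\<eta> = frac (of_int q * \<gamma>)"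
  have eta0: "0 < \<eta>" and etae: "\<eta> < e" using q unfolding \<eta>_def by auto
  have eta_le: "\<eta> < 1/2" "4 * \<eta> < c - a" using etae unfolding e_def by auto
  define T1 where "T1 = nat \<lceil>1 / \<eta>\<rceil>"
  define J where "J = nat \<lfloor>c / \<eta>\<rfloor>"
  define Q where "Q = \<bar>real_of_int q\<bar>"
  have Q0: "Q \<ge> 0" unfolding Q_def by simp
  have T1a: "real T1 \<ge> 1 / \<eta>" and T1b: "real T1 \<le> 1 / \<eta> + 1"
    unfolding T1_def using nat_ceiling_bounds[of "1/\<eta>"] eta0 by auto
  have "1 / \<eta> > 0" using eta0 by simp
  then have T1pos: "real T1 > 0" using T1a by linarith
  have "c / \<eta> \<ge> 0" using c0 eta0 by simp
  then have Jb: "real J > c / \<eta> - 1" unfolding J_def using nat_floor_bounds[of "c/\<eta>"] by linarith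
  have J0: "real J \<ge> 0" by simp
  have up1: "real n \<le> real T1 * (real (Gc \<gamma> \<delta> \<eta> n) + real T1 * Q)" for n
    using Gc_upper[OF eta0 \<eta>_def, of 1 T1 \<delta> n] unfolding T1_def Q_def by (simp add: Gc_one)
  have low: "real J * (real (Gc \<gamma> \<delta> \<eta> n) - real J * Q) \<le> real (Gc \<gamma> \<delta> c n)" for n
    using Gc_lower[OF eta0 \<eta>_def c1 J_def, of \<delta> n] unfolding Q_def by simp
  define l where "l = (\<lambda>n::nat. real J / real T1 - real J * (real T1 + real J) * Q / real n)"
  have lbound: "l n \<le> real (Gc \<gamma> \<delta> c n) / real n" if "n > 0" for n
  proof -
    have "real n / real T1 - real T1 * Q \<le> real (Gc \<gamma> \<delta> \<eta> n)"
      using up1[of n] T1pos by (simp add: field_simps)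
    then have "real J * (real n / real T1 - real T1 * Q - real J * Q) \<le> real J * (real (Gc \<gamma> \<delta> \<eta> n) - real J * Q)"
      using J0 by (intro mult_left_mono) auto
    also have "\<dots> \<le> real (Gc \<gamma> \<delta> c n)" by (rule low)
    finally have "real J * (real n / real T1 - real T1 * Q - real J * Q) \<le> real (Gc \<gamma> \<delta> c n)" .
    then have H: "real J * real n - real J * (real T1 + real J) * Q * real T1 \<le> real T1 * real (Gc \<gamma> \<delta> c n)"
      using T1pos by (simp add: field_simps)
    have "l n = (real J * real n - real J * (real T1 + real J) * Q * real T1) / (real T1 * real n)"
      unfolding l_def using that T1pos by (simp add: field_simps)
    also have "\<dots> \<le> (real T1 * real (Gc \<gamma> \<delta> c n)) / (real T1 * real n)"
      using H that T1pos by (intro divide_right_mono) auto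
    also have "\<dots> = real (Gc \<gamma> \<delta> c n) / real n" using T1pos by simp
    finally show ?thesis .
  qed
  have "l \<longlonglongrightarrow> real J / real T1 - 0"
    unfolding l_def by (intro tendsto_intros)
  moreover have "a < real J / real T1"
  proof -
    have "a * real T1 < real J"
    proof (cases "a \<ge> 0")
      case True
      have "a * real T1 * \<eta> \<le> a * (1 / \<eta> + 1) * \<eta>"
        using True T1b eta0 by (intro mult_right_mono mult_left_mono) auto
      also have "\<dots> = a + a * \<eta>" using eta0 by (simp add: field_simps)
      also have "\<dots> \<le> a + \<eta>" using mult_right_mono[of a 1 \<eta>] a c1 eta0 by simp
      also have "\<dots> < c - \<eta>" using eta_le eta0 by linarith
      also have "\<dots> < real J * \<eta>" using Jb eta0 by (simp add: field_simps)
      finally show ?thesis using eta0 by simp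
    next
      case False
      then have "a * real T1 < 0" using T1pos by (simp add: mult_neg_pos)
      then show ?thesis using J0 by linarith
    qed
    then show ?thesis using T1pos by (simp add: field_simps)
  qed
  ultimately have "eventually (\<lambda>n. a < l n) sequentially"
    by (simp add: order_tendstoD(1))
  from eventually_conj[OF this eventually_gt_at_top[of 0]]
  show "eventually (\<lambda>n. a < real (Gc \<gamma> \<delta> c n) / real n) sequentially"
    by (rule eventually_mono) (metis lbound less_le_trans)
next
  fix a assume a: "a > c"
  show "eventually (\<lambda>n. real (Gc \<gamma> \<delta> c n) / real n < a) sequentially"
  proof (cases "a > 1")
    case True
    have lt: "real (Gc \<gamma> \<delta> c n) / real n < a" if "n > 0" for n
    proof -
      have "real (Gc \<gamma> \<delta> c n) / real n \<le> 1" using Gc_le[of \<gamma> \<delta> c n] that by simp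
      then show ?thesis using True by simp
    qed
    from eventually_gt_at_top[of 0] show ?thesis by (rule eventually_mono) (rule lt)
  next
    case False
    define e where "e = min (1/2) ((a - c)/4)"
    have e0: "e > 0" using a unfolding e_def by simp
    obtain q where q: "0 < frac (of_int q * \<gamma>)" "frac (of_int q * \<gamma>) < e"
      using small_frac[OF irr e0] by blast
    define \<eta> where "\<eta> = frac (of_int q * \<gamma>)"
    have eta0: "0 < \<eta>" and etae: "\<eta> < e" using q unfolding \<eta>_def by auto
    have eta_le: "\<eta> < 1/2" "4 * \<eta> < a - c" using etae unfolding e_def by auto
    define T0 where "T0 = nat \<lfloor>1 / \<eta>\<rfloor>"
    define J where "J = nat \<lceil>c / \<eta>\<rceil>"
    define Q where "Q = \<bar>real_of_int q\<bar>"
    have Q0: "Q \<ge> 0" unfolding Q_def by simp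
    have inv2: "1 / \<eta> > 2" using eta_le eta0 by (simp add: field_simps)
    have T0a: "real T0 > 1 / \<eta> - 1" unfolding T0_def using inv2 nat_floor_bounds[of "1/\<eta>"] by linarith
    have T0pos: "real T0 > 0" using T0a inv2 by linarith
    have "c / \<eta> \<ge> 0" using c0 eta0 by simp
    then have Jb: "real J \<le> c / \<eta> + 1" unfolding J_def using nat_ceiling_bounds[of "c/\<eta>"] by linarith
    have J0: "real J \<ge> 0" by simp
    have low1: "real T0 * (real (Gc \<gamma> \<delta> \<eta> n) - real T0 * Q) \<le> real n" for n
      using Gc_lower[OF eta0 \<eta>_def _ T0_def, of \<delta> n] unfolding Q_def by (simp add: Gc_one)
    have up: "real (Gc \<gamma> \<delta> c n) \<le> real J * (real (Gc \<gamma> \<delta> \<eta> n) + real J * Q)" for n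
      using Gc_upper[OF eta0 \<eta>_def c0 J_def, of \<delta> n] unfolding Q_def by simp
    define u where "u = (\<lambda>n::nat. real J / real T0 + real J * (real T0 + real J) * Q / real n)"
    have ubound: "real (Gc \<gamma> \<delta> c n) / real n \<le> u n" if "n > 0" for n
    proof -
      have "real (Gc \<gamma> \<delta> \<eta> n) \<le> real n / real T0 + real T0 * Q"
        using low1[of n] T0pos by (simp add: field_simps)
      then have "real J * (real (Gc \<gamma> \<delta> \<eta> n) + real J * Q) \<le> real J * (real n / real T0 + real T0 * Q + real J * Q)"
        using J0 by (intro mult_left_mono) auto
      then have "real (Gc \<gamma> \<delta> c n) \<le> real J * (real n / real T0 + real T0 * Q + real J * Q)"
        using up[of n] by linarith
      then have H: "real T0 * real (Gc \<gamma> \<delta> c n) \<le> real J * real n + real J * (real T0 + real J) * Q * real T0"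
        using T0pos by (simp add: field_simps)
      have "real (Gc \<gamma> \<delta> c n) / real n = (real T0 * real (Gc \<gamma> \<delta> c n)) / (real T0 * real n)"
        using T0pos by simp
      also have "\<dots> \<le> (real J * real n + real J * (real T0 + real J) * Q * real T0) / (real T0 * real n)"
        using H that T0pos by (intro divide_right_mono) auto
      also have "\<dots> = u n" unfolding u_def using that T0pos by (simp add: field_simps)
      finally show ?thesis .
    qed
    have "u \<longlonglongrightarrow> real J / real T0 + 0"
      unfolding u_def by (intro tendsto_intros)
    moreover have "real J / real T0 < a"
    proof -
      have a1: "a \<le> 1" using False by simp
      have "real J * \<eta> \<le> c + \<eta>" using Jb eta0 by (simp add: field_simps)
      also have "\<dots> < a - \<eta>" using eta_le eta0 by linarith
      also have "\<dots> \<le> a - a * \<eta>" using mult_right_mono[of a 1 \<eta>] a1 eta0 by simp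
      also have "\<dots> = a * (1 / \<eta> - 1) * \<eta>" using eta0 by (simp add: field_simps)
      also have "\<dots> \<le> a * real T0 * \<eta>"
        using T0a eta0 a c0 by (intro mult_right_mono mult_left_mono) auto
      finally have "real J < a * real T0" using eta0 by simp
      then show ?thesis using T0pos by (simp add: field_simps)
    qed
    ultimately have "eventually (\<lambda>n. u n < a) sequentially"
      by (simp add: order_tendstoD(2))
    from eventually_conj[OF this eventually_gt_at_top[of 0]]
    show ?thesis
      by (rule eventually_mono) (metis ubound le_less_trans)
  qed
qed



lemma length_Hlist[simp]: "length (Hlist L m) = m"
  by (induction m) auto

lemma Hlist_nth: "i < m \<Longrightarrow> Hlist L m ! i = Hnext L (Hlist L i)"
proof (induction m)
  case 0 then show ?case by simp
next
  case (Suc m)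
  then show ?case
    by (cases "i < m") (auto simp: nth_append less_Suc_eq)
qed

lemma Hs_Suc: "Hs L (Suc n) = Hnext L (Hlist L n)"
  unfolding Hs_def by (simp add: nth_append)

lemma Hlist_nth_Hs: "i < m \<Longrightarrow> Hlist L m ! i = Hs L (Suc i)"
  by (simp add: Hlist_nth Hs_Suc)

lemma Hs_rec:
  assumes "n \<ge> 1" "length L \<ge> 1"
  shows "Hs L n = (if n \<le> length L + 1 then 1 + (\<Sum>k=1..<n. aco L k * Hs L (n - k))
     else (\<Sum>k=1..<length L. aco L k * Hs L (n - k)) + (1 + aco L (length L)) * Hs L (n - length L))"
proof -
  obtain m where m: "n = Suc m" using assms by (cases n) auto
  have 1: "Hlist L m ! (n - k - 1) = Hs L (n - k)" if "1 \<le> k" "k < n" for k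
  proof -
    have e: "n - k - 1 = m - k" "Suc (m - k) = n - k" using that m by auto
    have "m - k < m" using that m by auto
    then show ?thesis unfolding e(1) by (simp add: Hlist_nth_Hs e(2))
  qed
  show ?thesis
    unfolding m Hs_Suc Hnext_def Let_def
    using 1 m
    apply (simp add: Let_def)
    apply (intro conjI impI)
    subgoal
    proof -
      assume "\<not> m \<le> length L"
      have "Hlist L m ! (m - length L) = Hs L (Suc m - length L)"
        using 1[of "length L"] m \<open>\<not> m \<le> length L\<close> assms(2) by auto
      then show ?thesis by simp
    qed
    done
qed

lemma asym_less_nat: "asym {(x::nat, y). x < y}"
  by (auto intro: asymI)

lemma lexless_asym: "lexless x y \<Longrightarrow> \<not> lexless y x"
  unfolding lexless_def using lexord_asymmetric[OF asym_less_nat] by blast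

lemma lexless_irrefl: "\<not> lexless x x"
  unfolding lexless_def by (rule lexord_irreflexive) simp

lemma lexless_trans: "lexless x y \<Longrightarrow> lexless y z \<Longrightarrow> lexless x z"
  unfolding lexless_def by (rule lexord_trans) (auto simp: trans_def)

lemma lexless_total: "x \<noteq> y \<Longrightarrow> lexless x y \<or> lexless y x"
proof -
  assume "x \<noteq> y"
  have "\<forall>a b. (a,b) \<in> {(x::nat, y). x < y} \<or> a = b \<or> (b,a) \<in> {(x::nat, y). x < y}" by auto
  from lexord_linear[OF this, of x y] \<open>x \<noteq> y\<close> show ?thesis unfolding lexless_def by blast
qed

lemma lexless_prefix: "lexless (u @ x) (u @ y) \<longleftrightarrow> lexless x y"
  unfolding lexless_def by (simp add: lexord_same_pref_iff)

lemma lexless_cons_lt: "a < b \<Longrightarrow> lexless (u @ a # x) (u @ b # y)"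
  unfolding lexless_def by (rule lexord_append_left_rightI) simp

lemma lexless_suf: "lexless u w \<Longrightarrow> length w \<le> length u \<Longrightarrow> lexless (u @ v) (w @ z)"
  unfolding lexless_def by (rule lexord_sufI)

lemma lexless_sufE: "lexless (x @ z) (y @ q) \<Longrightarrow> length x = length y \<Longrightarrow> length z = length q \<Longrightarrow> x \<noteq> y \<Longrightarrow> lexless x y"
  unfolding lexless_def by (rule lexord_sufE)

lemma zeros_le: "length w = j \<Longrightarrow> w = replicate j 0 \<or> lexless (replicate j 0) w"
proof (induction w arbitrary: j)
  case Nil then show ?case by simp
next
  case (Cons a w)
  then obtain j' where j: "j = Suc j'" by auto
  show ?case
  proof (cases "a = 0")
    case True
    then show ?thesis using Cons.IH[of j'] Cons.prems j
      using lexless_prefix[of "[0]" "replicate j' 0" w] by auto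
  next
    case False
    then show ?thesis unfolding j using lexless_cons_lt[of 0 a "[]"] by simp
  qed
qed

locale Lsys =
  fixes L :: "nat list"
  assumes lenL: "2 \<le> length L" and a1: "0 < L ! 0"
begin

abbreviation "N \<equiv> length L"
abbreviation "H \<equiv> Hs L"
abbreviation "Th \<equiv> theta_seq L"
abbreviation "tp \<equiv> theta_pre L"

lemma N1: "1 \<le> N" using lenL by simp

lemma Th_small: "1 \<le> k \<Longrightarrow> k \<le> N \<Longrightarrow> Th k = aco L k"
  unfolding theta_seq_def aco_def by simp

lemma Th_1: "Th 1 > 0" using a1 N1 unfolding theta_seq_def by simp

lemma Th_period: "1 \<le> k \<Longrightarrow> N dvd t \<Longrightarrow> Th (k + t) = Th k"
  unfolding theta_seq_def
proof -
  assume "1 \<le> k" "N dvd t"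
  then have "(k + t - 1) mod N = (k - 1) mod N"
    by (metis Nat.add_diff_assoc2 mod_add_right_eq mod_0 add_0_right dvd_imp_mod_0)
  then show "L ! ((k + t - 1) mod N) = L ! ((k - 1) mod N)" by simp
qed

lemma Th_mult: "1 \<le> t \<Longrightarrow> N dvd t \<Longrightarrow> Th t = aco L N"
proof -
  assume "1 \<le> t" "N dvd t"
  then obtain q where q: "t = N * q" by (auto elim!: dvdE)
  with \<open>1 \<le> t\<close> obtain q' where q': "q = Suc q'" by (cases q) auto
  have "t - 1 = (N - 1) + N * q'" using q q' N1 by (simp add: algebra_simps)
  moreover have "(N - 1 + N * q') mod N = (N - 1) mod N" by (simp only: mod_mult_self2)
  ultimately have "(t - 1) mod N = N - 1" using N1 by simp
  then show ?thesis unfolding theta_seq_def aco_def by simp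
qed

lemma length_tp[simp]: "length (tp s) = s"
  unfolding theta_pre_def by simp

lemma tp_Suc: "tp (Suc s) = tp s @ [Th (Suc s)]"
  unfolding theta_pre_def by simp

lemma tp_0[simp]: "tp 0 = []"
  unfolding theta_pre_def by simp

lemma tp_nth: "i < s \<Longrightarrow> tp s ! i = Th (Suc i)"
  unfolding theta_pre_def by (simp del: upt_Suc add: nth_map_upt)

lemma take_tp: "j \<le> s \<Longrightarrow> take j (tp s) = tp j"
  unfolding theta_pre_def by (simp del: upt_Suc add: take_map take_upt)

lemma tp_add: "N dvd t \<Longrightarrow> tp (t + u) = tp t @ tp u"
proof (induction u)
  case 0 then show ?case by simp
next
  case (Suc u)
  have "Th (Suc (t + u)) = Th (Suc u)"
    using Th_period[of "Suc u" t] Suc.prems by (simp add: add.commute)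
  then show ?case using Suc by (simp add: tp_Suc)
qed

lemma tp_N: "tp N = L"
  by (rule nth_equalityI) (simp_all add: tp_nth theta_seq_def)

fun evp :: "nat list \<Rightarrow> nat \<Rightarrow> nat" where
  "evp [] j = 0"
| "evp (x # xs) j = x * H (length xs + j + 1) + evp xs j"

lemma evp_append: "evp (u @ v) j = evp u (length v + j) + evp v j"
  by (induction u) (auto simp: algebra_simps)

lemma evp_zeros[simp]: "evp (replicate n 0) j = 0"
  by (induction n) auto

lemma evp_app_zeros: "evp (u @ replicate n 0) j = evp u (n + j)"
  by (simp add: evp_append)

lemma evp_sum: "evp xs j = (\<Sum>k=1..length xs. xs ! (k - 1) * H (length xs + j - k + 1))"
proof (induction xs)
  case Nil then show ?case by simp
next
  case (Cons x xs)
  define l where "l = length xs"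
  define g where "g = (\<lambda>k. (x # xs) ! (k - 1) * H (Suc l + j - k + 1))"
  have "(\<Sum>k=1..Suc l. g k) = g 1 + (\<Sum>k=Suc 1..Suc l. g k)"
    by (rule sum.atLeast_Suc_atMost) simp
  also have "(\<Sum>k=Suc 1..Suc l. g k) = (\<Sum>k=1..l. g (Suc k))"
    by (rule sum.shift_bounds_cl_Suc_ivl)
  also have "\<dots> = (\<Sum>k=1..l. xs ! (k - 1) * H (l + j - k + 1))"
    unfolding g_def by (intro sum.cong) (auto simp: nth_Cons')
  finally have "(\<Sum>k=1..Suc l. g k) = x * H (l + j + 1) + (\<Sum>k=1..l. xs ! (k - 1) * H (l + j - k + 1))"
    unfolding g_def by simp
  then have "(\<Sum>k=1..length (x # xs). (x # xs) ! (k - 1) * H (length (x # xs) + j - k + 1))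
      = x * H (length xs + j + 1) + (\<Sum>k=1..length xs. xs ! (k - 1) * H (length xs + j - k + 1))"
    unfolding g_def l_def by simp
  then show ?case using Cons by simp
qed

lemma evalH_evp: "evalH L e = evp e 0"
  unfolding evalH_def evp_sum by (intro sum.cong) auto

lemma H_tp: "H (Suc n) = evp (tp n) 0 + 1"
proof (induction n rule: less_induct)
  case (less n)
  show ?case
  proof (cases "n \<le> N")
    case True
    have "H (Suc n) = 1 + (\<Sum>k=1..<Suc n. aco L k * H (Suc n - k))"
      using Hs_rec[of "Suc n" L] True N1 by simp
    also have "(\<Sum>k=1..<Suc n. aco L k * H (Suc n - k)) = evp (tp n) 0"
      unfolding evp_sum
      by (intro sum.cong) (use True in \<open>auto simp: tp_nth Th_small Suc_diff_le\<close>)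
    finally show ?thesis by simp
  next
    case False
    have "H (Suc n) = (\<Sum>k=1..<N. aco L k * H (Suc n - k)) + (1 + aco L N) * H (Suc n - N)"
      using Hs_rec[of "Suc n" L] False N1 by simp
    moreover have "H (Suc n - N) = evp (tp (n - N)) 0 + 1"
      using less[of "n - N"] False N1 by (simp add: Suc_diff_le)
    moreover have "tp n = tp N @ tp (n - N)"
      using tp_add[of N "n - N"] False by simp
    moreover have "evp (tp N) (n - N) = (\<Sum>k=1..<N. aco L k * H (Suc n - k)) + aco L N * H (Suc n - N)"
    proof -
      have "evp (tp N) (n - N) = (\<Sum>k=1..N. aco L k * H (Suc n - k))"
        unfolding evp_sum using False
        by (intro sum.cong) (auto simp: tp_nth Th_small Suc_diff_le)
      also have "\<dots> = (\<Sum>k=1..<N. aco L k * H (Suc n - k)) + aco L N * H (Suc n - N)"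
        using N1 by (simp add: sum.last_plus)
      finally show ?thesis .
    qed
    ultimately show ?thesis by (simp add: evp_append algebra_simps)
  qed
qed

definition P :: "nat \<Rightarrow> nat \<Rightarrow> nat" where
  "P n s = evp (tp s) (n - s)"

lemma P_Suc: "s < n \<Longrightarrow> P n (Suc s) = P n s + Th (Suc s) * H (n - s)"
  unfolding P_def tp_Suc evp_append by (simp add: Suc_diff_Suc algebra_simps)

lemma P_0[simp]: "P n 0 = 0"
  unfolding P_def by simp

lemma P_n: "P n n + 1 = H (Suc n)"
  unfolding P_def using H_tp by simp

lemma P_mono: "s \<le> s' \<Longrightarrow> s' \<le> n \<Longrightarrow> P n s \<le> P n s'"
proof (induction s' rule: dec_induct)
  case base then show ?case by simp
next
  case (step m)
  then show ?case using P_Suc[of m n] by simp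
qed

lemma evp_step: "length (tp s @ [c] @ r) = n \<Longrightarrow> evp (tp s @ [c] @ r) 0 = P n s + c * H (n - s) + evp r 0"
proof -
  assume "length (tp s @ [c] @ r) = n"
  then have "n - s = Suc (length r)" by simp
  then show ?thesis unfolding P_def by (simp add: evp_append)
qed

lemma H_1: "H (Suc 0) = 1"
  using H_tp[of 0] by simp

lemma H_step: "H (Suc n) < H (Suc (Suc n))"
proof -
  have "tp (Suc n) = Th 1 # tl (tp (Suc n))"
  proof -
    have "tp (Suc n) \<noteq> []" by (metis length_tp list.size(3) nat.distinct(1))
    then have "tp (Suc n) = hd (tp (Suc n)) # tl (tp (Suc n))" by simp
    moreover have "hd (tp (Suc n)) = Th 1" using \<open>tp (Suc n) \<noteq> []\<close> by (simp add: hd_conv_nth tp_nth)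
    ultimately show ?thesis by simp
  qed
  moreover have "length (tl (tp (Suc n))) = n" by simp
  ultimately have "evp (tp (Suc n)) 0 \<ge> Th 1 * H (Suc n)"
    by (metis evp.simps(2) add_0_right Suc_eq_plus1 le_add1)
  moreover have "Th 1 * H (Suc n) \<ge> H (Suc n)" using Th_1 mult_le_mono1[of 1 "Th 1" "H (Suc n)"] by simp
  ultimately show ?thesis using H_tp[of "Suc n"] by linarith
qed

lemma H_strict: "1 \<le> m \<Longrightarrow> m < n \<Longrightarrow> H m < H n"
proof (induction n rule: less_induct)
  case (less n)
  then have "2 \<le> n" by simp
  then obtain n' where n: "n = Suc (Suc n')" using add_2_eq_Suc le_Suc_ex by metis
  have "H (Suc n') < H n" using H_step n by simp
  show ?case
  proof (cases "m = Suc n'")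
    case True then show ?thesis using \<open>H (Suc n') < H n\<close> by simp
  next
    case False
    then have "m < Suc n'" using less.prems n by simp
    then have "H m < H (Suc n')" using less.IH[of "Suc n'"] less.prems n by simp
    then show ?thesis using \<open>H (Suc n') < H n\<close> by simp
  qed
qed

lemma H_mono: "1 \<le> m \<Longrightarrow> m \<le> n \<Longrightarrow> H m \<le> H n"
  using H_strict[of m n] by (cases "m = n") auto

lemma H_pos: "1 \<le> n \<Longrightarrow> 1 \<le> H n"
  using H_mono[of 1 n] H_1 by simp

lemma H_ge: "1 \<le> n \<Longrightarrow> n \<le> H n"
proof (induction n rule: dec_induct)
  case base then show ?case using H_1 by simp
next
  case (step n) then show ?case using H_strict[of n "Suc n"] by simp
qed

lemma Hcirc_cases':
  assumes "e \<in> Hcirc L"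
  shows "e = tp (length e) \<or> (\<exists>s c r. e = tp s @ [c] @ r \<and> c < Th (Suc s) \<and> r \<in> Hcirc L)"
  using assms by cases auto

lemma nil_Hcirc: "[] \<in> Hcirc L"
  using Hcirc.full[of L 0] by simp

lemma zero_cons_Hcirc: "r \<in> Hcirc L \<Longrightarrow> 0 # r \<in> Hcirc L"
  using Hcirc.step[of 0 L 0 r] Th_1 by simp

lemma tp_Suc_Cons: "\<exists>w. tp (Suc s) = Th 1 # w"
proof -
  have "tp (Suc s) \<noteq> []" by (metis length_tp list.size(3) nat.distinct(1))
  then have "tp (Suc s) = hd (tp (Suc s)) # tl (tp (Suc s))" by simp
  moreover have "hd (tp (Suc s)) = Th 1" using \<open>tp (Suc s) \<noteq> []\<close> by (simp add: hd_conv_nth tp_nth)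
  ultimately show ?thesis by metis
qed

lemma cons_zero_Hcirc:
  assumes "0 # r \<in> Hcirc L" shows "r \<in> Hcirc L"
  using assms
proof (cases rule: Hcirc.cases)
  case (full n)
  then obtain n' where "n = Suc n'" by (cases n) auto
  then show ?thesis using full tp_Suc_Cons[of n'] Th_1 by auto
next
  case (step c s r')
  show ?thesis
  proof (cases s)
    case 0 then show ?thesis using step by simp
  next
    case (Suc s')
    then show ?thesis using step tp_Suc_Cons[of s'] Th_1 by auto
  qed
qed

lemma snoc_zero_Hcirc: "e \<in> Hcirc L \<Longrightarrow> e @ [0] \<in> Hcirc L"
proof (induction rule: Hcirc.induct)
  case (full n)
  show ?case
  proof (cases "Th (Suc n) > 0")
    case True
    then show ?thesis using Hcirc.step[of 0 L n "[]"] nil_Hcirc by simp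
  next
    case False
    then have "tp (Suc n) = tp n @ [0]" by (simp add: tp_Suc)
    then show ?thesis by (metis Hcirc.full)
  qed
next
  case (step c s r)
  then show ?case using Hcirc.step[of c L s "r @ [0]"] by simp
qed

lemma zeros_Hcirc: "e \<in> Hcirc L \<Longrightarrow> e @ replicate j 0 \<in> Hcirc L"
proof (induction j)
  case 0 then show ?case by simp
next
  case (Suc j)
  then show ?case using snoc_zero_Hcirc[of "e @ replicate j 0"]
    by (simp add: replicate_append_same[symmetric])
qed

lemma take_Hcirc: "e \<in> Hcirc L \<Longrightarrow> take j e \<in> Hcirc L"
proof (induction arbitrary: j rule: Hcirc.induct)
  case (full n)
  then show ?case using take_tp[of "min j n" n] by (metis Hcirc.full min.cobounded2 take_take take_all_iff length_tp nat_le_linear)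
next
  case (step c s r)
  show ?case
  proof (cases "j \<le> s")
    case True
    then show ?thesis by (simp add: take_tp Hcirc.full)
  next
    case False
    then have "take j (tp s @ [c] @ r) = tp s @ [c] @ take (j - s - 1) r"
      by (simp add: take_append) (metis Suc_diff_Suc diff_diff_left not_le take_Suc_Cons plus_1_eq_Suc)
    then show ?thesis using step Hcirc.step by metis
  qed
qed

lemma tp_split: "s' < s \<Longrightarrow> \<exists>w. tp s @ v = tp s' @ Th (Suc s') # w"
proof -
  assume "s' < s"
  have "tp s = take s' (tp s) @ tp s ! s' # drop (Suc s') (tp s)"
    using \<open>s' < s\<close> by (simp add: id_take_nth_drop)
  then have "tp s = tp s' @ Th (Suc s') # drop (Suc s') (tp s)"
    using \<open>s' < s\<close> by (simp add: take_tp tp_nth)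
  then show ?thesis by (metis append.assoc append_Cons)
qed

lemma ev_lt_H: "e \<in> Hcirc L \<Longrightarrow> evp e 0 < H (Suc (length e))"
proof (induction rule: Hcirc.induct)
  case (full n)
  then show ?case using P_n[of n] unfolding P_def by simp
next
  case (step c s r)
  define n where "n = length (tp s @ [c] @ r)"
  have nr: "n - s = Suc (length r)" "s < n" unfolding n_def by auto
  have "evp (tp s @ [c] @ r) 0 = P n s + c * H (n - s) + evp r 0"
    by (rule evp_step) (simp add: n_def)
  also have "\<dots> < P n s + (c + 1) * H (n - s)" using step.IH nr by simp
  also have "\<dots> \<le> P n s + Th (Suc s) * H (n - s)" using step.hyps by (intro add_left_mono mult_right_mono) auto
  also have "\<dots> = P n (Suc s)" using P_Suc nr by simp
  also have "\<dots> \<le> P n n" using P_mono nr by simp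
  also have "\<dots> < H (Suc n)" using P_n[of n] by simp
  finally show ?case unfolding n_def .
qed

lemma step_upper:
  assumes "r \<in> Hcirc L" "c < Th (Suc s)" "length (tp s @ [c] @ r) = n"
  shows "evp (tp s @ [c] @ r) 0 < P n (Suc s)"
proof -
  have nr: "n - s = Suc (length r)" "s < n" using assms(3) by auto
  have "evp (tp s @ [c] @ r) 0 = P n s + c * H (n - s) + evp r 0"
    by (rule evp_step[OF assms(3)])
  also have "\<dots> < P n s + (c + 1) * H (n - s)" using ev_lt_H[OF assms(1)] nr by simp
  also have "\<dots> \<le> P n s + Th (Suc s) * H (n - s)" using assms(2) by (intro add_left_mono mult_right_mono) auto
  also have "\<dots> = P n (Suc s)" using P_Suc nr by simp
  finally show ?thesis .
qed

lemma ev_mono_lex: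
  assumes "e \<in> Hcirc L" "e' \<in> Hcirc L" "length e = length e'" "lexless e e'"
  shows "evp e 0 < evp e' 0"
  using assms
proof (induction "length e" arbitrary: e e' rule: less_induct)
  case less
  define n where "n = length e"
  have contra: False if "lexless e' e" using that less.prems(4) lexless_asym by blast
  from Hcirc_cases'[OF less.prems(1)] show ?case
  proof
    assume e: "e = tp (length e)"
    from Hcirc_cases'[OF less.prems(2)] show ?thesis
    proof
      assume "e' = tp (length e')"
      then have "e = e'" using e less.prems(3) by simp
      then show ?thesis using less.prems(4) lexless_irrefl by blast
    next
      assume "\<exists>s c r. e' = tp s @ [c] @ r \<and> c < Th (Suc s) \<and> r \<in> Hcirc L"
      then obtain s' c' r' where e': "e' = tp s' @ [c'] @ r'" "c' < Th (Suc s')" "r' \<in> Hcirc L" by blast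
      have "s' < length e" using e' less.prems(3) by simp
      then obtain w where "tp (length e) @ [] = tp s' @ Th (Suc s') # w" using tp_split by blast
      then have "lexless e' e" using e e' lexless_cons_lt[OF e'(2), of "tp s'" r' w] by simp
      then show ?thesis using contra by blast
    qed
  next
    assume "\<exists>s c r. e = tp s @ [c] @ r \<and> c < Th (Suc s) \<and> r \<in> Hcirc L"
    then obtain s c r where e: "e = tp s @ [c] @ r" "c < Th (Suc s)" "r \<in> Hcirc L" by blast
    have upper: "evp e 0 < P n (Suc s)" using step_upper[OF e(3) e(2)] e(1) n_def by simp
    have sn: "s < n" using e n_def by simp
    from Hcirc_cases'[OF less.prems(2)] show ?thesis
    proof
      assume e': "e' = tp (length e')"
      have "evp e' 0 = P n n" using e' less.prems(3) n_def unfolding P_def by simp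
      moreover have "P n (Suc s) \<le> P n n" using P_mono sn by simp
      ultimately show ?thesis using upper by simp
    next
      assume "\<exists>s c r. e' = tp s @ [c] @ r \<and> c < Th (Suc s) \<and> r \<in> Hcirc L"
      then obtain s' c' r' where e': "e' = tp s' @ [c'] @ r'" "c' < Th (Suc s')" "r' \<in> Hcirc L" by blast
      have lower': "P n s' + c' * H (n - s') \<le> evp e' 0"
        using evp_step[of s' c' r' n] e' less.prems(3) n_def by simp
      consider "s < s'" | "s' < s" | "s = s'" by linarith
      then show ?thesis
      proof cases
        case 1
        have "P n (Suc s) \<le> P n s'" using P_mono 1 e' less.prems(3) n_def by simp
        then show ?thesis using upper lower' by simp
      next
        case 2
        then obtain w where "tp s @ [c] @ r = tp s' @ Th (Suc s') # w" using tp_split by blast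
        then have "lexless e' e" using e e' lexless_cons_lt[OF e'(2), of "tp s'" r' w] by simp
        then show ?thesis using contra by blast
      next
        case 3
        consider "c < c'" | "c' < c" | "c = c'" by linarith
        then show ?thesis
        proof cases
          case 1
          have "evp e 0 = P n s + c * H (n - s) + evp r 0" using evp_step e(1) n_def by simp
          also have "\<dots> < P n s + (c + 1) * H (n - s)" using ev_lt_H[OF e(3)] e(1) n_def by simp
          also have "\<dots> \<le> P n s + c' * H (n - s)" using 1 by (intro add_left_mono mult_right_mono) auto
          finally show ?thesis using lower' 3 by simp
        next
          case 2
          then have "lexless e' e" using e e' 3 lexless_cons_lt[of c' c "tp s" r' r] by simp
          then show ?thesis using contra by blast
        next
          case cc: 3
          have "lexless r r'" using less.prems(4) e e' 3 cc lexless_prefix[of "tp s @ [c]" r r'] by simp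
          moreover have "length r = length r'" using less.prems(3) e e' 3 by simp
          moreover have "length r < length e" using e by simp
          ultimately have "evp r 0 < evp r' 0" using less.hyps e(3) e'(3) by blast
          then show ?thesis using evp_step[of s c r n] evp_step[of s' c' r' n] e e' 3 cc less.prems(3) n_def by simp
        qed
      qed
    qed
  qed
qed

lemma ev_inj:
  assumes "e \<in> Hcirc L" "e' \<in> Hcirc L" "length e = length e'" "evp e 0 = evp e' 0"
  shows "e = e'"
proof (rule ccontr)
  assume "e \<noteq> e'"
  then have "lexless e e' \<or> lexless e' e" by (rule lexless_total)
  then show False using ev_mono_lex[OF assms(1-3)] ev_mono_lex[OF assms(2,1)] assms(3,4) by auto
qed

lemma ev_lex_iff:
  assumes "e \<in> Hcirc L" "e' \<in> Hcirc L" "length e = length e'"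
  shows "lexless e e' \<longleftrightarrow> evp e 0 < evp e' 0"
proof
  assume "lexless e e'" then show "evp e 0 < evp e' 0" using ev_mono_lex assms by blast
next
  assume lt: "evp e 0 < evp e' 0"
  then have "e \<noteq> e'" by auto
  then have "lexless e e' \<or> lexless e' e" by (rule lexless_total)
  then show "lexless e e'" using ev_mono_lex[OF assms(2,1)] assms(3) lt by auto
qed

lemma find_step:
  fixes f :: "nat \<Rightarrow> nat"
  assumes "f 0 \<le> m" "m < f n"
  shows "\<exists>s<n. f s \<le> m \<and> m < f (Suc s)"
  using assms
proof (induction n)
  case 0 then show ?case by simp
next
  case (Suc n)
  show ?case
  proof (cases "m < f n")
    case True then show ?thesis using Suc by (meson less_SucI)
  next
    case False then show ?thesis using Suc by (intro exI[of _ n]) auto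
  qed
qed

lemma ev_surj: "m < H (Suc n) \<Longrightarrow> \<exists>e. e \<in> Hcirc L \<and> length e = n \<and> evp e 0 = m"
proof (induction n arbitrary: m rule: less_induct)
  case (less n)
  show ?case
  proof (cases "m = P n n")
    case True
    then show ?thesis using Hcirc.full[of L n] unfolding P_def by (intro exI[of _ "tp n"]) simp
  next
    case False
    then have "m < P n n" using less.prems P_n[of n] by simp
    then obtain s where s: "s < n" "P n s \<le> m" "m < P n (Suc s)"
      using find_step[of "P n" m n] by auto
    define h where "h = H (n - s)"
    have "1 \<le> n - s" using s(1) by simp
    then have "1 \<le> H (n - s)" by (rule H_pos)
    then have hpos: "h > 0" unfolding h_def by simp
    define c where "c = (m - P n s) div h"
    define \<rho> where "\<rho> = (m - P n s) mod h"
    have "m - P n s < Th (Suc s) * h" using s P_Suc[of s n] unfolding h_def by simp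
    then have c: "c < Th (Suc s)" unfolding c_def by (simp add: less_mult_imp_div_less)
    have "\<rho> < h" unfolding \<rho>_def using hpos by simp
    then have "\<rho> < H (Suc (n - s - 1))" unfolding h_def using s(1) by (simp add: Suc_diff_Suc)
    then obtain r where r: "r \<in> Hcirc L" "length r = n - s - 1" "evp r 0 = \<rho>"
      using less.IH[of "n - s - 1"] s(1) by auto
    have len: "length (tp s @ [c] @ r) = n" using r(2) s(1) by simp
    have "evp (tp s @ [c] @ r) 0 = P n s + c * h + \<rho>" using evp_step[OF len] r(3) unfolding h_def by simp
    also have "\<dots> = m" unfolding c_def \<rho>_def using s(2) by simp
    finally show ?thesis using len Hcirc.step[OF c r(1)] by blast
  qed
qed

lemma adm_bounds:
  assumes "e \<in> Hadm L"
  shows "1 \<le> length e" "H (length e) \<le> evp e 0" "evp e 0 < H (Suc (length e))"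
proof -
  from assms have e: "e \<in> Hcirc L" "e \<noteq> []" "hd e > 0" unfolding Hadm_def by auto
  obtain x xs where x: "e = x # xs" using e(2) by (meson neq_Nil_conv)
  show "1 \<le> length e" using x by simp
  have "x \<ge> 1" using e x by simp
  then have "H (length e) \<le> x * H (length e)" by simp
  also have "\<dots> \<le> evp e 0" using x by simp
  finally show "H (length e) \<le> evp e 0" .
  show "evp e 0 < H (Suc (length e))" using ev_lt_H e by simp
qed

lemma len_unique:
  assumes "1 \<le> M" "1 \<le> M'" "H M \<le> m" "m < H (Suc M)" "H M' \<le> m" "m < H (Suc M')"
  shows "M = M'"
proof (rule ccontr)
  assume "M \<noteq> M'"
  then consider "M < M'" | "M' < M" by linarith
  then show False
  proof cases
    case 1 then have "H (Suc M) \<le> H M'" using H_mono by simp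
    then show False using assms by simp
  next
    case 2 then have "H (Suc M') \<le> H M" using H_mono by simp
    then show False using assms by simp
  qed
qed

lemma adm_unique:
  assumes "e \<in> Hadm L" "e' \<in> Hadm L" "evp e 0 = evp e' 0"
  shows "e = e'"
proof -
  have "length e = length e'"
    using len_unique[OF adm_bounds(1)[OF assms(1)] adm_bounds(1)[OF assms(2)]]
      adm_bounds(2,3)[OF assms(1)] adm_bounds(2,3)[OF assms(2)] assms(3) by simp
  then show ?thesis using ev_inj assms unfolding Hadm_def by auto
qed

lemma adm_exists:
  assumes "1 \<le> m"
  shows "\<exists>e. e \<in> Hadm L \<and> evp e 0 = m"
proof -
  have "H (Suc 0) \<le> m" "m < H (Suc m)" using assms H_1 H_ge[of "Suc m"] by auto
  then obtain s where s: "H (Suc s) \<le> m" "m < H (Suc (Suc s))"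
    using find_step[of "\<lambda>k. H (Suc k)" m m] by auto
  obtain e where e: "e \<in> Hcirc L" "length e = Suc s" "evp e 0 = m"
    using ev_surj[OF s(2)] by blast
  obtain x xs where x: "e = x # xs" using e(2) by (cases e) simp_all
  have "x > 0"
  proof (rule ccontr)
    assume "\<not> x > 0"
    then have "x = 0" by simp
    then have "xs \<in> Hcirc L" using e x cons_zero_Hcirc by simp
    then have "evp xs 0 < H (Suc s)" using ev_lt_H e x by fastforce
    then show False using s e x \<open>x = 0\<close> by simp
  qed
  then show ?thesis using e x unfolding Hadm_def by auto
qed

lemma expansion_eq: "e \<in> Hadm L \<Longrightarrow> expansion L (evp e 0) = e"
  unfolding expansion_def evalH_evp
  by (rule the_equality) (auto intro: adm_unique)

lemma expansion_props:
  assumes "1 \<le> m"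
  shows "expansion L m \<in> Hadm L" "evp (expansion L m) 0 = m"
  using adm_exists[OF assms] expansion_eq by auto

definition pad :: "nat \<Rightarrow> nat list \<Rightarrow> nat list" where
  "pad s x = (if N \<le> s then x else x @ replicate (N - s) 0)"

lemma pad_inj: "length x = length y \<Longrightarrow> pad s x = pad s y \<Longrightarrow> x = y"
  unfolding pad_def by (auto split: if_splits)

lemma pad_lex: "length x = length y \<Longrightarrow> lexless (pad s x) (pad s y) \<longleftrightarrow> lexless x y"
proof
  assume l: "length x = length y" and a: "lexless (pad s x) (pad s y)"
  show "lexless x y"
  proof (cases "x = y")
    case True then show ?thesis using a lexless_irrefl by simp
  next
    case False then show ?thesis using a l unfolding pad_def
      by (auto split: if_splits intro: lexless_sufE)
  qed
next
  assume l: "length x = length y" and a: "lexless x y"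
  then show "lexless (pad s x) (pad s y)" unfolding pad_def using lexless_suf[OF a] by auto
qed

lemma LB_expansion:
  assumes "1 \<le> m"
  shows "LB L s m = (if length (expansion L m) < s then None else Some (pad s (take s (expansion L m))))"
  unfolding LB_def pad_def Let_def by auto

definition Bs :: "nat \<Rightarrow> nat list set" where
  "Bs s = {p. p \<in> Hcirc L \<and> length p = s \<and> 0 < hd p}"

lemma Bs_Hadm: "1 \<le> s \<Longrightarrow> p \<in> Bs s \<Longrightarrow> p \<in> Hadm L"
  unfolding Bs_def Hadm_def by auto

lemma Hblocks_char:
  assumes "1 \<le> s"
  shows "Hblocks L s = pad s ` Bs s"
proof
  show "Hblocks L s \<subseteq> pad s ` Bs s"
  proof
    fix b assume "b \<in> Hblocks L s"
    then obtain m where m: "1 \<le> m" "LB L s m = Some b" unfolding Hblocks_def by auto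
    define e where "e = expansion L m"
    have e: "e \<in> Hadm L" using expansion_props[OF m(1)] e_def by simp
    have les: "s \<le> length e" and b: "b = pad s (take s e)"
      using m(2) LB_expansion[OF m(1), of s] e_def by (auto split: if_splits)
    have "take s e \<in> Bs s"
      unfolding Bs_def using e les assms take_Hcirc[of e s] unfolding Hadm_def
      by (auto simp: hd_take)
    then show "b \<in> pad s ` Bs s" using b by simp
  qed
next
  show "pad s ` Bs s \<subseteq> Hblocks L s"
  proof
    fix b assume "b \<in> pad s ` Bs s"
    then obtain p where p: "p \<in> Bs s" "b = pad s p" by auto
    have pa: "p \<in> Hadm L" using Bs_Hadm[OF assms p(1)] .
    define m where "m = evp p 0"
    have m1: "1 \<le> m" using adm_bounds[OF pa] H_pos unfolding m_def by (meson order_trans)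
    have "expansion L m = p" unfolding m_def by (rule expansion_eq[OF pa])
    then have "LB L s m = Some b" using LB_expansion[OF m1, of s] p unfolding Bs_def by simp
    then show "b \<in> Hblocks L s" unfolding Hblocks_def using m1 by auto
  qed
qed

lemma prefix_lower:
  assumes "e \<in> Hcirc L" "length e = M" "s \<le> M" "take s e = p"
  shows "evp p (M - s) \<le> evp e 0"
proof -
  have lp: "length p = s" using assms by auto
  have pz: "p @ replicate (M - s) 0 \<in> Hcirc L" using zeros_Hcirc take_Hcirc assms by metis
  have e: "e = p @ drop s e" using assms(4) by (metis append_take_drop_id)
  have ld: "length (drop s e) = M - s" using assms by simp
  from zeros_le[OF ld] show ?thesis
  proof
    assume "drop s e = replicate (M - s) 0"
    then have "evp e 0 = evp p (M - s)" using e evp_app_zeros[of p "M - s" 0] by simp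
    then show ?thesis by simp
  next
    assume "lexless (replicate (M - s) 0) (drop s e)"
    then have "lexless (p @ replicate (M - s) 0) e" using e lexless_prefix by metis
    then have "evp (p @ replicate (M - s) 0) 0 < evp e 0"
      using ev_mono_lex[OF pz assms(1)] lp assms by simp
    then show ?thesis using evp_app_zeros[of p "M - s" 0] by simp
  qed
qed

lemma prefix_upper:
  assumes "e \<in> Hcirc L" "length e = M" "s \<le> M" "take s e = p"
    and "q \<in> Hcirc L" "length q = s" "lexless p q"
  shows "evp e 0 < evp q (M - s)"
proof -
  have lp: "length p = s" using assms by auto
  have qz: "q @ replicate (M - s) 0 \<in> Hcirc L" using zeros_Hcirc assms by metis
  have e: "e = p @ drop s e" using assms(4) by (metis append_take_drop_id)
  have "lexless e (q @ replicate (M - s) 0)"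
    using lexless_suf[OF assms(7), of "drop s e" "replicate (M - s) 0"] e lp assms(6) by simp
  then have "evp e 0 < evp (q @ replicate (M - s) 0) 0"
    using ev_mono_lex[OF assms(1) qz] assms by simp
  then show ?thesis using evp_app_zeros[of q "M - s" 0] by simp
qed

lemma tp_value: "evp (tp s) 0 + 1 = H (Suc s)"
  using H_tp by simp

lemma Bs_in: "p \<in> Bs s \<Longrightarrow> p \<in> Hcirc L \<and> length p = s"
  unfolding Bs_def by auto

lemma succ_exists:
  assumes "1 \<le> s" "p \<in> Bs s" "p \<noteq> tp s"
  shows "\<exists>p'. p' \<in> Bs s \<and> evp p' 0 = evp p 0 + 1"
proof -
  have p: "p \<in> Hcirc L" "length p = s" using Bs_in[OF assms(2)] by auto
  have "evp p 0 \<noteq> evp (tp s) 0"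
    using ev_inj[OF p(1) Hcirc.full[of L s]] p assms(3) by auto
  moreover have "evp p 0 < H (Suc s)" using ev_lt_H[OF p(1)] p by simp
  ultimately have "evp p 0 + 1 < H (Suc s)" using tp_value[of s] by simp
  then obtain p' where p': "p' \<in> Hcirc L" "length p' = s" "evp p' 0 = evp p 0 + 1"
    using ev_surj by blast
  obtain x xs where x: "p' = x # xs" using p'(2) assms(1) by (cases p') auto
  have "x > 0"
  proof (rule ccontr)
    assume "\<not> x > 0"
    then have "x = 0" by simp
    then have "xs \<in> Hcirc L" using p' x cons_zero_Hcirc by simp
    then have "evp xs 0 < H s" using ev_lt_H p'(2) x by fastforce
    moreover have "H s \<le> evp p 0" using adm_bounds(2)[OF Bs_Hadm[OF assms(1,2)]] p by simp
    ultimately show False using p'(3) x \<open>x = 0\<close> by simp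
  qed
  then show ?thesis using p' x unfolding Bs_def by auto
qed

lemma succ_block_nonmax:
  assumes "1 \<le> s" "p \<in> Bs s" "p' \<in> Bs s" "evp p' 0 = evp p 0 + 1"
  shows "succ_block L s (pad s p) = pad s p'"
proof -
  have p: "p \<in> Hcirc L" "length p = s" using Bs_in[OF assms(2)] by auto
  have p': "p' \<in> Hcirc L" "length p' = s" using Bs_in[OF assms(3)] by auto
  have lpp: "lexless p p'" using ev_lex_iff[OF p(1) p'(1)] p p' assms(4) by simp
  have HB: "Hblocks L s = pad s ` Bs s" by (rule Hblocks_char[OF assms(1)])
  have c1: "pad s p' \<in> Hblocks L s" using HB assms(3) by simp
  have c2: "lexless (pad s p) (pad s p')" using pad_lex p p' lpp by simp
  have c3: "\<not> lexless d (pad s p')" if "d \<in> Hblocks L s" "lexless (pad s p) d" for d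
  proof
    assume a: "lexless d (pad s p')"
    from that(1) HB obtain q where q: "q \<in> Bs s" "d = pad s q" by auto
    have q': "q \<in> Hcirc L" "length q = s" using Bs_in[OF q(1)] by auto
    have "lexless p q" using that(2) q pad_lex p q' by simp
    then have "evp p 0 < evp q 0" using ev_lex_iff[OF p(1) q'(1)] p q' by simp
    moreover have "lexless q p'" using a q pad_lex p' q' by simp
    then have "evp q 0 < evp p' 0" using ev_lex_iff[OF q'(1) p'(1)] p' q' by simp
    ultimately show False using assms(4) by simp
  qed
  have ex: "\<exists>c \<in> Hblocks L s. lexless (pad s p) c" using c1 c2 by blast
  have "(THE c. c \<in> Hblocks L s \<and> lexless (pad s p) c \<and>
                  (\<forall>d \<in> Hblocks L s. lexless (pad s p) d \<longrightarrow> \<not> lexless d c)) = pad s p'"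
  proof (rule the_equality)
    show "pad s p' \<in> Hblocks L s \<and> lexless (pad s p) (pad s p') \<and>
         (\<forall>d \<in> Hblocks L s. lexless (pad s p) d \<longrightarrow> \<not> lexless d (pad s p'))"
      using c1 c2 c3 by blast
  next
    fix c assume c: "c \<in> Hblocks L s \<and> lexless (pad s p) c \<and>
                  (\<forall>d \<in> Hblocks L s. lexless (pad s p) d \<longrightarrow> \<not> lexless d c)"
    have n1: "\<not> lexless (pad s p') c" using c c1 c2 by blast
    have n2: "\<not> lexless c (pad s p')" using c c3 by blast
    show "c = pad s p'" using lexless_total n1 n2 by blast
  qed
  then show ?thesis unfolding succ_block_def using ex by simp
qed

lemma succ_block_max:
  assumes "1 \<le> s"
  shows "succ_block L s (pad s (tp s)) = exclusive_block L s"
proof -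
  have "\<not> (\<exists>c \<in> Hblocks L s. lexless (pad s (tp s)) c)"
  proof
    assume "\<exists>c \<in> Hblocks L s. lexless (pad s (tp s)) c"
    then obtain q where q: "q \<in> Bs s" "lexless (pad s (tp s)) (pad s q)"
      using Hblocks_char[OF assms] by auto
    have q': "q \<in> Hcirc L" "length q = s" using Bs_in[OF q(1)] by auto
    have "lexless (tp s) q" using q(2) pad_lex q' by simp
    then have "evp (tp s) 0 < evp q 0" using ev_lex_iff[OF Hcirc.full q'(1)] q' by simp
    moreover have "evp q 0 < H (Suc s)" using ev_lt_H[OF q'(1)] q' by simp
    ultimately show False using tp_value[of s] by simp
  qed
  then show ?thesis unfolding succ_block_def by simp
qed

lemma P_period:
  assumes "N dvd t" "t \<le> M"
  shows "P M t + H (Suc M - t) = H (Suc M)"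
proof -
  have "tp M = tp t @ tp (M - t)" using tp_add[OF assms(1), of "M - t"] assms(2) by simp
  then have "evp (tp M) 0 = evp (tp t) (M - t) + evp (tp (M - t)) 0" by (simp add: evp_append)
  moreover have "H (Suc M) = evp (tp M) 0 + 1" by (rule H_tp)
  moreover have "H (Suc (M - t)) = evp (tp (M - t)) 0 + 1" by (rule H_tp)
  ultimately show ?thesis unfolding P_def using assms(2) by (simp add: Suc_diff_le)
qed

lemma excl_form:
  assumes "1 \<le> s"
  shows "\<exists>t p0. N dvd t \<and> 1 \<le> t \<and> s \<le> t + p0 \<and>
     exclusive_block L s = tp (t - 1) @ [Th t + 1] @ replicate p0 0"
proof (cases "N \<le> s")
  case True
  define p0 where "p0 = s mod N"
  define t where "t = s - p0"
  have dvd: "N dvd t" unfolding t_def p0_def by (simp add: minus_mod_eq_mult_div)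
  have "p0 < N" unfolding p0_def using N1 by (intro mod_less_divisor) linarith
  then have t1: "1 \<le> t" using True unfolding t_def by simp
  have "take (s - p0 - 1) (tp (s - p0)) = tp (t - 1)" unfolding t_def by (simp add: take_tp)
  moreover have "aco L N = Th t" using Th_mult[OF t1 dvd] by simp
  ultimately have "exclusive_block L s = tp (t - 1) @ [Th t + 1] @ replicate p0 0"
    unfolding exclusive_block_def Let_def p0_def using True by simp
  moreover have "s \<le> t + p0" unfolding t_def p0_def by simp
  ultimately show ?thesis using dvd t1 by blast
next
  case False
  have "Suc (N - 1) = N" using N1 by simp
  then have "L = tp (N - 1) @ [Th N]" using tp_N tp_Suc[of "N - 1"] by simp
  then have "butlast L = tp (N - 1)" "last L = Th N" by (metis butlast_snoc, metis last_snoc)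
  then have "exclusive_block L s = tp (N - 1) @ [Th N + 1] @ replicate 0 0"
    unfolding exclusive_block_def Let_def using False by simp
  then show ?thesis using False N1 by (intro exI[of _ N] exI[of _ 0]) auto
qed

lemma excl_value:
  assumes "1 \<le> s"
  shows "\<exists>l. s \<le> l \<and> length (exclusive_block L s) = l \<and> (\<forall>j. evp (exclusive_block L s) j = H (Suc (l + j)))"
proof -
  obtain t p0 where tp0: "N dvd t" "1 \<le> t" "s \<le> t + p0"
    "exclusive_block L s = tp (t - 1) @ [Th t + 1] @ replicate p0 0"
    using excl_form[OF assms] by blast
  have "evp (exclusive_block L s) j = H (Suc (t + p0 + j))" for j
  proof -
    have tt: "tp t = tp (t - 1) @ [Th t]" using tp_Suc[of "t - 1"] tp0(2) by simp
    have "evp (exclusive_block L s) j = evp (tp (t - 1)) (Suc (p0 + j)) + (Th t + 1) * H (Suc (p0 + j))"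
      unfolding tp0(4) by (simp add: evp_append algebra_simps)
    also have "\<dots> = evp (tp t) (p0 + j) + H (Suc (p0 + j))"
      unfolding tt by (simp add: evp_append algebra_simps)
    also have "\<dots> = P (t + p0 + j) t + H (Suc (t + p0 + j) - t)" unfolding P_def by simp
    also have "\<dots> = H (Suc (t + p0 + j))" using P_period[OF tp0(1), of "t + p0 + j"] by simp
    finally show ?thesis .
  qed
  moreover have "length (exclusive_block L s) = t + p0" unfolding tp0(4) using tp0(2) by simp
  ultimately show ?thesis using tp0(3) by (intro exI[of _ "t + p0"]) simp
qed

definition sucp :: "nat \<Rightarrow> nat list \<Rightarrow> nat list" where
  "sucp s p = (SOME p'. p' \<in> Bs s \<and> evp p' 0 = evp p 0 + 1)"

lemma sucp:
  assumes "1 \<le> s" "p \<in> Bs s" "p \<noteq> tp s"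
  shows "sucp s p \<in> Bs s" "evp (sucp s p) 0 = evp p 0 + 1"
  using someI_ex[OF succ_exists[OF assms]] unfolding sucp_def by auto

definition Up :: "nat \<Rightarrow> nat list \<Rightarrow> nat \<Rightarrow> nat" where
  "Up s p M = (if p = tp s then H (Suc M) else evp (sucp s p) (M - s))"

lemma zeros_adm:
  assumes "1 \<le> s" "p \<in> Bs s"
  shows "p @ replicate j 0 \<in> Hadm L"
proof -
  have "p \<noteq> []" using assms unfolding Bs_def by auto
  then show ?thesis using assms zeros_Hcirc[of p j] unfolding Bs_def Hadm_def by (auto simp: hd_append)
qed

lemma A_ge: "1 \<le> s \<Longrightarrow> p \<in> Bs s \<Longrightarrow> s \<le> M \<Longrightarrow> H M \<le> evp p (M - s)"
  using adm_bounds(2)[OF zeros_adm[of s p "M - s"]] Bs_in[of p s] evp_app_zeros[of p "M - s" 0] by simp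

lemma Up_le: "1 \<le> s \<Longrightarrow> p \<in> Bs s \<Longrightarrow> s \<le> M \<Longrightarrow> Up s p M \<le> H (Suc M)"
proof -
  assume a: "1 \<le> s" "p \<in> Bs s" "s \<le> M"
  show ?thesis
  proof (cases "p = tp s")
    case True then show ?thesis unfolding Up_def by simp
  next
    case False
    have "sucp s p \<in> Bs s" using sucp[OF a(1,2) False] by simp
    then have "evp (sucp s p @ replicate (M - s) 0) 0 < H (Suc M)"
      using adm_bounds(3)[OF zeros_adm[of s "sucp s p" "M - s"]] a Bs_in[of "sucp s p" s] by simp
    then show ?thesis unfolding Up_def using False evp_app_zeros[of "sucp s p" "M - s" 0] by simp
  qed
qed

lemma A_lt_Up: "1 \<le> s \<Longrightarrow> p \<in> Bs s \<Longrightarrow> s \<le> M \<Longrightarrow> evp p (M - s) < Up s p M"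
proof -
  assume a: "1 \<le> s" "p \<in> Bs s" "s \<le> M"
  have p: "p \<in> Hcirc L" "length p = s" using Bs_in[OF a(2)] by auto
  show ?thesis
  proof (cases "p = tp s")
    case True
    then show ?thesis unfolding Up_def
      using adm_bounds(3)[OF zeros_adm[OF a(1,2), of "M - s"]] evp_app_zeros[of p "M - s" 0] p a by simp
  next
    case False
    note sp = sucp[OF a(1,2) False]
    have sp': "sucp s p \<in> Hcirc L" "length (sucp s p) = s" using Bs_in[OF sp(1)] by auto
    have "lexless p (sucp s p)" using ev_lex_iff[OF p(1) sp'(1)] p sp' sp(2) by simp
    then have "lexless (p @ replicate (M - s) 0) (sucp s p @ replicate (M - s) 0)"
      using lexless_suf p sp' by simp
    then have "evp (p @ replicate (M - s) 0) 0 < evp (sucp s p @ replicate (M - s) 0) 0"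
      using ev_mono_lex zeros_Hcirc p sp' by simp
    then show ?thesis unfolding Up_def using False by (simp add: evp_app_zeros)
  qed
qed

lemma prefix_eq:
  assumes s1: "1 \<le> s" and p: "p \<in> Bs s" and e: "e \<in> Hcirc L" "length e = M" and sM: "s \<le> M"
  shows "take s e = p \<longleftrightarrow> evp p (M - s) \<le> evp e 0 \<and> evp e 0 < Up s p M"
proof
  assume t: "take s e = p"
  have "evp p (M - s) \<le> evp e 0" using prefix_lower[OF e sM t] .
  moreover have "evp e 0 < Up s p M"
  proof (cases "p = tp s")
    case True then show ?thesis unfolding Up_def using ev_lt_H[OF e(1)] e by simp
  next
    case False
    note sp = sucp[OF s1 p False]
    have sp': "sucp s p \<in> Hcirc L" "length (sucp s p) = s" using Bs_in[OF sp(1)] by auto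
    have pp: "p \<in> Hcirc L" "length p = s" using Bs_in[OF p] by auto
    have "lexless p (sucp s p)" using ev_lex_iff[OF pp(1) sp'(1)] pp sp' sp(2) by simp
    then show ?thesis unfolding Up_def using False prefix_upper[OF e sM t sp'] by simp
  qed
  ultimately show "evp p (M - s) \<le> evp e 0 \<and> evp e 0 < Up s p M" by simp
next
  assume b: "evp p (M - s) \<le> evp e 0 \<and> evp e 0 < Up s p M"
  define q where "q = take s e"
  have q: "q \<in> Hcirc L" "length q = s" unfolding q_def using take_Hcirc e sM by auto
  have pp: "p \<in> Hcirc L" "length p = s" using Bs_in[OF p] by auto
  show "take s e = p"
  proof (rule ccontr)
    assume "take s e \<noteq> p"
    then have "q \<noteq> p" unfolding q_def .
    then consider "lexless q p" | "lexless p q" using lexless_total by blast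
    then show False
    proof cases
      case 1
      have "evp e 0 < evp p (M - s)" using prefix_upper[OF e sM q_def[symmetric] pp 1] .
      then show False using b by simp
    next
      case 2
      have pq: "evp p 0 < evp q 0" using ev_lex_iff[OF pp(1) q(1)] pp q 2 by simp
      show False
      proof (cases "p = tp s")
        case True
        have "evp q 0 < H (Suc s)" using ev_lt_H[OF q(1)] q by simp
        then show False using pq True tp_value[of s] by simp
      next
        case False
        note sp = sucp[OF s1 p False]
        have sp': "sucp s p \<in> Hcirc L" "length (sucp s p) = s" using Bs_in[OF sp(1)] by auto
        have low: "evp q (M - s) \<le> evp e 0" using prefix_lower[OF e sM q_def[symmetric]] .
        have "evp (sucp s p) (M - s) \<le> evp q (M - s)"
        proof (cases "q = sucp s p")
          case True then show ?thesis by simp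
        next
          case False
          have "evp (sucp s p) 0 < evp q 0"
          proof -
            have "evp (sucp s p) 0 \<le> evp q 0" using pq sp(2) by simp
            moreover have "evp (sucp s p) 0 \<noteq> evp q 0" using ev_inj[OF sp'(1) q(1)] sp' q False by auto
            ultimately show ?thesis by simp
          qed
          then have "lexless (sucp s p) q" using ev_lex_iff[OF sp'(1) q(1)] sp' q by simp
          then have "lexless (sucp s p @ replicate (M - s) 0) (q @ replicate (M - s) 0)"
            using lexless_suf sp' q by simp
          then have "evp (sucp s p @ replicate (M - s) 0) 0 < evp (q @ replicate (M - s) 0) 0"
            using ev_mono_lex zeros_Hcirc sp' q by simp
          then show ?thesis by (simp add: evp_app_zeros)
        qed
        then show False using b low False unfolding Up_def by simp
      qed
    qed
  qed
qed

lemma block_inner: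
  assumes s1: "1 \<le> s" and p: "p \<in> Bs s" and sM: "s \<le> M"
    and m: "evp p (M - s) \<le> m" "m < Up s p M"
  shows "LB L s m = Some (pad s p)"
proof -
  have HM: "H M \<le> m" using A_ge[OF s1 p sM] m by simp
  have HM1: "m < H (Suc M)" using Up_le[OF s1 p sM] m by simp
  have M1: "1 \<le> M" using s1 sM by simp
  have m1: "1 \<le> m" using HM H_pos[OF M1] by simp
  define e where "e = expansion L m"
  have e: "e \<in> Hadm L" "evp e 0 = m" using expansion_props[OF m1] e_def by auto
  have le: "length e = M"
    using len_unique[OF adm_bounds(1)[OF e(1)] M1] adm_bounds(2,3)[OF e(1)] e(2) HM HM1 by simp
  have ec: "e \<in> Hcirc L" using e unfolding Hadm_def by simp
  have "take s e = p" using prefix_eq[OF s1 p ec le sM] m e(2) by simp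
  then show ?thesis using LB_expansion[OF m1, of s] le sM e_def by simp
qed

lemma block_outer:
  assumes s1: "1 \<le> s" and p: "p \<in> Bs s" and m1: "1 \<le> m" and lb: "LB L s m = Some (pad s p)"
  shows "\<exists>M. s \<le> M \<and> H M \<le> m \<and> m < H (Suc M) \<and> evp p (M - s) \<le> m \<and> m < Up s p M"
proof -
  define e where "e = expansion L m"
  have e: "e \<in> Hadm L" "evp e 0 = m" using expansion_props[OF m1] e_def by auto
  define M where "M = length e"
  have sM: "s \<le> M" and pe: "pad s (take s e) = pad s p"
    using lb LB_expansion[OF m1, of s] unfolding e_def M_def by (auto split: if_splits)
  have "take s e = p" using pad_inj[OF _ pe] Bs_in[OF p] sM M_def by simp
  moreover have ec: "e \<in> Hcirc L" using e unfolding Hadm_def by simp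
  ultimately have "evp p (M - s) \<le> m \<and> m < Up s p M" using prefix_eq[OF s1 p ec M_def[symmetric] sM] e(2) by simp
  moreover have "H M \<le> m" "m < H (Suc M)" using adm_bounds[OF e(1)] e(2) M_def by auto
  ultimately show ?thesis using sM by blast
qed

lemma succ_pad:
  assumes "1 \<le> s" "p \<in> Bs s"
  shows "succ_block L s (pad s p) = (if p = tp s then exclusive_block L s else pad s (sucp s p))"
  using succ_block_max[OF assms(1)] succ_block_nonmax[OF assms sucp[OF assms]] by auto

end



lemma convex_upper:
  fixes w x :: "nat \<Rightarrow> real"
  assumes k0: "k0 \<in> {1..N}" and w0: "\<And>k. 0 \<le> w k" and ws: "(\<Sum>k=1..N. w k) = 1"
    and xB: "\<And>k. k \<in> {1..N} \<Longrightarrow> x k \<le> B"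
  shows "(\<Sum>k=1..N. w k * x k) \<le> w k0 * x k0 + (1 - w k0) * B"
proof -
  have "(\<Sum>k=1..N. w k * x k) = w k0 * x k0 + (\<Sum>k\<in>{1..N} - {k0}. w k * x k)"
    using k0 by (simp add: sum.remove)
  also have "(\<Sum>k\<in>{1..N} - {k0}. w k * x k) \<le> (\<Sum>k\<in>{1..N} - {k0}. w k * B)"
    using xB w0 by (intro sum_mono mult_left_mono) auto
  also have "(\<Sum>k\<in>{1..N} - {k0}. w k * B) = (1 - w k0) * B"
    using k0 ws by (simp add: sum.remove sum_distrib_right[symmetric])
  finally show ?thesis by simp
qed

lemma convex_lower:
  fixes w x :: "nat \<Rightarrow> real"
  assumes k0: "k0 \<in> {1..N}" and w0: "\<And>k. 0 \<le> w k" and ws: "(\<Sum>k=1..N. w k) = 1"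
    and xB: "\<And>k. k \<in> {1..N} \<Longrightarrow> B \<le> x k"
  shows "w k0 * x k0 + (1 - w k0) * B \<le> (\<Sum>k=1..N. w k * x k)"
proof -
  have "(\<Sum>k=1..N. w k * x k) = w k0 * x k0 + (\<Sum>k\<in>{1..N} - {k0}. w k * x k)"
    using k0 by (simp add: sum.remove)
  moreover have "(\<Sum>k\<in>{1..N} - {k0}. w k * B) \<le> (\<Sum>k\<in>{1..N} - {k0}. w k * x k)"
    using xB w0 by (intro sum_mono mult_left_mono) auto
  moreover have "(\<Sum>k\<in>{1..N} - {k0}. w k * B) = (1 - w k0) * B"
    using k0 ws by (simp add: sum.remove sum_distrib_right[symmetric])
  ultimately show ?thesis by simp
qed

lemma avg_conv:
  fixes r w :: "nat \<Rightarrow> real" and N n0 :: nat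
  assumes N1: "1 \<le> N" and w0: "\<And>k. 0 \<le> w k" and ws: "(\<Sum>k=1..N. w k) = 1"
    and w1: "0 < w 1" and wN: "0 < w N"
    and rec: "\<And>n. n0 \<le> n \<Longrightarrow> r n = (\<Sum>k=1..N. w k * r (n - k))" and n0: "N \<le> n0"
  shows "\<exists>l. r \<longlonglongrightarrow> l \<and> Min (r ` {n0 - N..<n0}) \<le> l"
proof -
  define W where "W = (\<lambda>n. r ` {n - N..<n})"
  define Mx where "Mx = (\<lambda>n. Max (W n))"
  define Mn where "Mn = (\<lambda>n. Min (W n))"
  have Wfin: "finite (W n)" for n unfolding W_def by simp
  have Wne: "W n \<noteq> {}" if "n0 \<le> n" for n unfolding W_def using that n0 N1 by auto
  have w1le: "w 1 \<le> 1"
  proof -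
    have "w 1 = (\<Sum>k\<in>{1}. w k)" by simp
    also have "\<dots> \<le> (\<Sum>k=1..N. w k)" using N1 w0 by (intro sum_mono2) auto
    finally show ?thesis using ws by simp
  qed
  have bounds: "Mn n \<le> r i \<and> r i \<le> Mx n" if "n0 \<le> n" "n - N \<le> i" for n i
    using that(2)
  proof (induction i rule: less_induct)
    case (less i)
    show ?case
    proof (cases "i < n")
      case True
      then have "r i \<in> W n" unfolding W_def using less.prems by auto
      then show ?thesis unfolding Mx_def Mn_def using Wfin by auto
    next
      case False
      then have ii: "n0 \<le> i" using that(1) by simp
      have xb: "Mn n \<le> r (i - k) \<and> r (i - k) \<le> Mx n" if "k \<in> {1..N}" for k
        using less.IH[of "i - k"] that False n0 ii by auto
      have "r i \<le> w 1 * r (i - 1) + (1 - w 1) * Mx n"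
        unfolding rec[OF ii] using N1 xb by (intro convex_upper[OF _ w0 ws]) auto
      also have "\<dots> \<le> w 1 * Mx n + (1 - w 1) * Mx n"
        using xb[of 1] N1 w0[of 1] by (intro add_right_mono mult_left_mono) auto
      finally have u: "r i \<le> Mx n" by (simp add: algebra_simps)
      have "w 1 * Mn n + (1 - w 1) * Mn n \<le> w 1 * r (i - 1) + (1 - w 1) * Mn n"
        using xb[of 1] N1 w0[of 1] by (intro add_right_mono mult_left_mono) auto
      also have "\<dots> \<le> r i"
        unfolding rec[OF ii] using N1 xb by (intro convex_lower[OF _ w0 ws]) auto
      finally have l: "Mn n \<le> r i" by (simp add: algebra_simps)
      show ?thesis using u l by simp
    qed
  qed
  define D where "D = (\<lambda>n. Mx n - Mn n)"
  have D0: "0 \<le> D n" if "n0 \<le> n" for n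
    using bounds[OF that, of "n - N"] unfolding D_def by simp
  define c0 where "c0 = w 1 ^ (2 * N) * w N"
  have c0pos: "0 < c0" unfolding c0_def using w1 wN by simp
  have contr_up: "Mx (n + 2 * N) \<le> Mx n - c0 * D n" if nn: "n0 \<le> n" for n
  proof -
    obtain j where j: "j \<in> {n - N..<n}" "r j = Mn n"
      using Min_in[OF Wfin Wne[OF nn]] unfolding Mn_def W_def by auto
    have claim: "r (j + N + t) \<le> Mx n - w 1 ^ t * w N * D n" for t
    proof (induction t)
      case 0
      have ii: "n0 \<le> j + N" using j nn by auto
      have xb: "r (j + N - k) \<le> Mx n" if "k \<in> {1..N}" for k
        using bounds[OF nn, of "j + N - k"] that j by auto
      have "r (j + N) \<le> w N * r (j + N - N) + (1 - w N) * Mx n"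
        unfolding rec[OF ii] using N1 xb by (intro convex_upper[OF _ w0 ws]) auto
      also have "\<dots> = Mx n - w N * D n" using j unfolding D_def by (simp add: algebra_simps)
      finally show ?case by simp
    next
      case (Suc t)
      have ii: "n0 \<le> j + N + Suc t" using j nn by auto
      have xb: "r (j + N + Suc t - k) \<le> Mx n" if "k \<in> {1..N}" for k
        using bounds[OF nn, of "j + N + Suc t - k"] that j by auto
      have "r (j + N + Suc t) \<le> w 1 * r (j + N + Suc t - 1) + (1 - w 1) * Mx n"
        unfolding rec[OF ii] using N1 xb by (intro convex_upper[OF _ w0 ws]) auto
      also have "\<dots> \<le> w 1 * (Mx n - w 1 ^ t * w N * D n) + (1 - w 1) * Mx n"
        using Suc.IH w0[of 1] by (intro add_right_mono mult_left_mono) auto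
      also have "\<dots> = Mx n - w 1 ^ Suc t * w N * D n" by (simp add: algebra_simps)
      finally show ?case .
    qed
    have "\<forall>x \<in> W (n + 2 * N). x \<le> Mx n - c0 * D n"
    proof
      fix x assume "x \<in> W (n + 2 * N)"
      then obtain i where i: "i \<in> {n + 2 * N - N..<n + 2 * N}" "x = r i" unfolding W_def by auto
      define t where "t = i - j - N"
      have it: "i = j + N + t" "t \<le> 2 * N" unfolding t_def using i j by auto
      have "w 1 ^ (2 * N) \<le> w 1 ^ t" using it(2) w0[of 1] w1le by (rule power_decreasing)
      then have "c0 * D n \<le> w 1 ^ t * w N * D n"
        unfolding c0_def using D0[OF nn] wN by (intro mult_right_mono) auto
      then show "x \<le> Mx n - c0 * D n" using claim[of t] it i by simp
    qed
    then show ?thesis unfolding Mx_def using Wfin Wne[of "n + 2 * N"] nn by simp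
  qed
  have contr_low: "Mn n + c0 * D n \<le> Mn (n + 2 * N)" if nn: "n0 \<le> n" for n
  proof -
    obtain j where j: "j \<in> {n - N..<n}" "r j = Mx n"
      using Max_in[OF Wfin Wne[OF nn]] unfolding Mx_def W_def by auto
    have claim: "Mn n + w 1 ^ t * w N * D n \<le> r (j + N + t)" for t
    proof (induction t)
      case 0
      have ii: "n0 \<le> j + N" using j nn by auto
      have xb: "Mn n \<le> r (j + N - k)" if "k \<in> {1..N}" for k
        using bounds[OF nn, of "j + N - k"] that j by auto
      have "Mn n + w N * D n = w N * r (j + N - N) + (1 - w N) * Mn n"
        using j unfolding D_def by (simp add: algebra_simps)
      also have "\<dots> \<le> r (j + N)"
        unfolding rec[OF ii] using N1 xb by (intro convex_lower[OF _ w0 ws]) auto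
      finally show ?case by simp
    next
      case (Suc t)
      have ii: "n0 \<le> j + N + Suc t" using j nn by auto
      have xb: "Mn n \<le> r (j + N + Suc t - k)" if "k \<in> {1..N}" for k
        using bounds[OF nn, of "j + N + Suc t - k"] that j by auto
      have "Mn n + w 1 ^ Suc t * w N * D n = w 1 * (Mn n + w 1 ^ t * w N * D n) + (1 - w 1) * Mn n"
        by (simp add: algebra_simps)
      also have "\<dots> \<le> w 1 * r (j + N + Suc t - 1) + (1 - w 1) * Mn n"
        using Suc.IH w0[of 1] by (intro add_right_mono mult_left_mono) auto
      also have "\<dots> \<le> r (j + N + Suc t)"
        unfolding rec[OF ii] using N1 xb by (intro convex_lower[OF _ w0 ws]) auto
      finally show ?case .
    qed
    have "\<forall>x \<in> W (n + 2 * N). Mn n + c0 * D n \<le> x"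
    proof
      fix x assume "x \<in> W (n + 2 * N)"
      then obtain i where i: "i \<in> {n + 2 * N - N..<n + 2 * N}" "x = r i" unfolding W_def by auto
      define t where "t = i - j - N"
      have it: "i = j + N + t" "t \<le> 2 * N" unfolding t_def using i j by auto
      have "w 1 ^ (2 * N) \<le> w 1 ^ t" using it(2) w0[of 1] w1le by (rule power_decreasing)
      then have "c0 * D n \<le> w 1 ^ t * w N * D n"
        unfolding c0_def using D0[OF nn] wN by (intro mult_right_mono) auto
      then show "Mn n + c0 * D n \<le> x" using claim[of t] it i by simp
    qed
    then show ?thesis unfolding Mn_def using Wfin Wne[of "n + 2 * N"] nn by simp
  qed
  define \<rho> where "\<rho> = max 0 (1 - 2 * c0)"
  have rho: "0 \<le> \<rho>" "\<rho> < 1" unfolding \<rho>_def using c0pos by auto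
  have Dstep: "D (n + 2 * N) \<le> \<rho> * D n" if nn: "n0 \<le> n" for n
  proof -
    have "D (n + 2 * N) \<le> (1 - 2 * c0) * D n"
      using contr_up[OF nn] contr_low[OF nn] unfolding D_def by (simp add: algebra_simps)
    also have "\<dots> \<le> \<rho> * D n" unfolding \<rho>_def using D0[OF nn] by (intro mult_right_mono) auto
    finally show ?thesis .
  qed
  have Dgeo: "D (n0 + 2 * N * q) \<le> \<rho> ^ q * D n0" for q
  proof (induction q)
    case 0 then show ?case by simp
  next
    case (Suc q)
    have "D (n0 + 2 * N * Suc q) = D ((n0 + 2 * N * q) + 2 * N)" by (simp add: algebra_simps)
    also have "\<dots> \<le> \<rho> * D (n0 + 2 * N * q)" by (rule Dstep) simp
    also have "\<dots> \<le> \<rho> * (\<rho> ^ q * D n0)" using Suc.IH rho by (intro mult_left_mono) auto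
    finally show ?case by simp
  qed
  have "Cauchy r"
  proof (rule CauchyI)
    fix e :: real assume e: "0 < e"
    obtain q where q: "\<rho> ^ q * D n0 < e"
    proof (cases "D n0 = 0")
      case True then show ?thesis using that[of 0] e by simp
    next
      case False
      then have "D n0 > 0" using D0[of n0] by simp
      then obtain q where "\<rho> ^ q < e / D n0" using real_arch_pow_inv[of "e / D n0" \<rho>] rho e by auto
      then show ?thesis using that[of q] \<open>D n0 > 0\<close> by (simp add: field_simps)
    qed
    define n where "n = n0 + 2 * N * q"
    have Dn: "D n < e" using Dgeo[of q] q unfolding n_def by simp
    have "\<forall>i\<ge>n. \<forall>i'\<ge>n. norm (r i - r i') < e"
    proof (intro allI impI)
      fix i i' assume "n \<le> i" "n \<le> i'"
      then have "Mn n \<le> r i \<and> r i \<le> Mx n" "Mn n \<le> r i' \<and> r i' \<le> Mx n"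
        using bounds[of n i] bounds[of n i'] unfolding n_def by auto
      then show "norm (r i - r i') < e" using Dn unfolding D_def by auto
    qed
    then show "\<exists>M. \<forall>m\<ge>M. \<forall>n\<ge>M. norm (r m - r n) < e" by blast
  qed
  then obtain l where l: "r \<longlonglongrightarrow> l" by (auto simp: Cauchy_convergent_iff convergent_def)
  have "Mn n0 \<le> l"
    by (rule LIMSEQ_le_const[OF l]) (use bounds[of n0] in auto)
  then show ?thesis using l unfolding Mn_def W_def by auto
qed

context Lsys
begin

definition fpol :: "real \<Rightarrow> real" where
  "fpol x = x ^ N - (\<Sum>k=1..<N. real (aco L k) * x ^ (N - k)) - (1 + real (aco L N))"

definition gw :: "real \<Rightarrow> real" where
  "gw x = (\<Sum>k=1..<N. real (aco L k) / x ^ k) + (1 + real (aco L N)) / x ^ N"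

lemma fpol_gw: "x > 0 \<Longrightarrow> fpol x = x ^ N * (1 - gw x)"
proof -
  assume x: "x > 0"
  have "x ^ N * (\<Sum>k=1..<N. real (aco L k) / x ^ k) = (\<Sum>k=1..<N. real (aco L k) * x ^ (N - k))"
    unfolding sum_distrib_left
  proof (intro sum.cong refl)
    fix k assume "k \<in> {1..<N}"
    then have "x ^ (N - k) = x ^ N / x ^ k" using x by (simp add: power_diff)
    then show "x ^ N * (real (aco L k) / x ^ k) = real (aco L k) * x ^ (N - k)" by simp
  qed
  moreover have "x ^ N * ((1 + real (aco L N)) / x ^ N) = 1 + real (aco L N)" using x by simp
  ultimately show ?thesis unfolding fpol_def gw_def by (simp add: algebra_simps)
qed

lemma gw_anti: "0 < x \<Longrightarrow> x < y \<Longrightarrow> gw y < gw x"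
proof -
  assume xy: "0 < x" "x < y"
  have "(\<Sum>k=1..<N. real (aco L k) / y ^ k) \<le> (\<Sum>k=1..<N. real (aco L k) / x ^ k)"
    using xy by (intro sum_mono divide_left_mono power_mono mult_pos_pos) auto
  moreover have "(1 + real (aco L N)) / y ^ N < (1 + real (aco L N)) / x ^ N"
    using xy N1 by (intro divide_strict_left_mono power_strict_mono mult_pos_pos) auto
  ultimately show ?thesis unfolding gw_def by simp
qed

lemma a1_pos: "aco L 1 > 0" using a1 unfolding aco_def by simp

lemma psi_props: "psi L > 1" "gw (psi L) = 1"
proof -
  define S where "S = (\<Sum>k=1..<N. real (aco L k)) + (1 + real (aco L N))"
  have one_in: "1 \<in> {1..<N}" using lenL by simp
  have S1: "S \<ge> 1 + real (aco L 1)"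
  proof -
    have "real (aco L 1) \<le> (\<Sum>k=1..<N. real (aco L k))"
      using one_in by (intro member_le_sum) auto
    then show ?thesis unfolding S_def by simp
  qed
  have g1: "gw 1 = S" unfolding gw_def S_def by simp
  have g1gt: "gw 1 > 1" using g1 S1 a1_pos by simp
  define X where "X = 1 + S"
  have X1: "X \<ge> 1" unfolding X_def using S1 by simp
  have gX: "gw X \<le> S / X"
  proof -
    have "(\<Sum>k=1..<N. real (aco L k) / X ^ k) \<le> (\<Sum>k=1..<N. real (aco L k) / X)"
    proof (intro sum_mono divide_left_mono)
      fix k assume "k \<in> {1..<N}"
      then show "X \<le> X ^ k" using X1 by (metis atLeastLessThan_iff power_increasing power_one_right)
    qed (use X1 in auto)
    moreover have "(1 + real (aco L N)) / X ^ N \<le> (1 + real (aco L N)) / X"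
      using X1 N1 by (intro divide_left_mono) (auto simp: power_increasing[of 1 N X, simplified])
    moreover have "S / X = (\<Sum>k=1..<N. real (aco L k) / X) + (1 + real (aco L N)) / X"
      unfolding S_def add_divide_distrib sum_divide_distrib ..
    ultimately show ?thesis unfolding gw_def by linarith
  qed
  have "S / X < 1" unfolding X_def using S1 by simp
  then have gXlt: "gw X \<le> 1" using gX by simp
  have cont: "continuous_on {1..X} gw"
  proof -
    have "continuous_on {1..X} (\<lambda>x. real (aco L k) / x ^ k)" for k
      by (rule continuous_on_divide) (auto intro: continuous_on_const continuous_on_power continuous_on_id)
    moreover have "continuous_on {1..X} (\<lambda>x. (1 + real (aco L N)) / x ^ N)"
      by (rule continuous_on_divide) (auto intro: continuous_on_const continuous_on_power continuous_on_id)
    ultimately show ?thesis unfolding gw_def by (intro continuous_on_add continuous_on_sum) auto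
  qed
  obtain x where x: "1 \<le> x" "x \<le> X" "gw x = 1"
    using IVT2'[of gw X 1 1, OF gXlt _ X1 cont] g1gt by auto
  have x1: "x > 1" using x g1gt by (cases "x = 1") auto
  have "psi L = x"
    unfolding psi_def
  proof (rule the_equality)
    show "x > 0 \<and> x ^ N - (\<Sum>k=1..<N. real (aco L k) * x ^ (N - k)) - (1 + real (aco L N)) = 0"
      using fpol_gw[of x] x x1 unfolding fpol_def by simp
  next
    fix y assume y: "y > 0 \<and> y ^ N - (\<Sum>k=1..<N. real (aco L k) * y ^ (N - k)) - (1 + real (aco L N)) = 0"
    then have "fpol y = 0" unfolding fpol_def by simp
    then have gy: "gw y = 1" using fpol_gw[of y] y by simp
    show "y = x"
    proof (rule ccontr)
      assume "y \<noteq> x"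
      then consider "y < x" | "x < y" by linarith
      then show False
        using gw_anti[of y x] gw_anti[of x y] y x1 gy x(3) by cases auto
    qed
  qed
  then show "psi L > 1" "gw (psi L) = 1" using x x1 by auto
qed

abbreviation "\<psi> \<equiv> psi L"

definition cw :: "nat \<Rightarrow> real" where
  "cw k = (if k < N then real (aco L k) else 1 + real (aco L N))"

definition ww :: "nat \<Rightarrow> real" where
  "ww k = cw k / \<psi> ^ k"

lemma psi0: "\<psi> > 0" using psi_props by simp

lemma ww_nonneg: "0 \<le> ww k" unfolding ww_def cw_def using psi0 by simp

lemma ww_1: "0 < ww 1"
proof -
  have "1 < N" using lenL by simp
  then show ?thesis unfolding ww_def cw_def using psi0 a1_pos by simp
qed

lemma ww_N: "0 < ww N" unfolding ww_def cw_def using psi0 by simp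

lemma ww_sum: "(\<Sum>k=1..N. ww k) = 1"
proof -
  have "(\<Sum>k=1..N. ww k) = (\<Sum>k=1..<N. ww k) + ww N" using N1 by (simp add: sum.last_plus add.commute)
  also have "(\<Sum>k=1..<N. ww k) = (\<Sum>k=1..<N. real (aco L k) / \<psi> ^ k)"
    unfolding ww_def cw_def by (intro sum.cong) auto
  finally show ?thesis using psi_props(2) unfolding gw_def ww_def cw_def by simp
qed

lemma H_rec_real: "N + 2 \<le> n \<Longrightarrow> real (H n) = (\<Sum>k=1..N. cw k * real (H (n - k)))"
proof -
  assume n: "N + 2 \<le> n"
  have "H n = (\<Sum>k=1..<N. aco L k * H (n - k)) + (1 + aco L N) * H (n - N)"
    using Hs_rec[of n L] n N1 by simp
  then have "real (H n) = (\<Sum>k=1..<N. real (aco L k) * real (H (n - k))) + (1 + real (aco L N)) * real (H (n - N))"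
    by (simp add: algebra_simps)
  also have "(\<Sum>k=1..<N. real (aco L k) * real (H (n - k))) = (\<Sum>k=1..<N. cw k * real (H (n - k)))"
    unfolding cw_def by (intro sum.cong) auto
  finally have "real (H n) = (\<Sum>k=1..<N. cw k * real (H (n - k))) + cw N * real (H (n - N))"
    unfolding cw_def by simp
  also have "\<dots> = (\<Sum>k=1..N. cw k * real (H (n - k)))"
    using N1 by (simp add: sum.last_plus add.commute)
  finally show ?thesis .
qed

definition rr :: "nat \<Rightarrow> real" where
  "rr n = real (H n) / \<psi> ^ n"

lemma rr_rec: "N + 2 \<le> n \<Longrightarrow> rr n = (\<Sum>k=1..N. ww k * rr (n - k))"
proof -
  assume n: "N + 2 \<le> n"
  have psi0: "\<psi> > 0" using psi_props by simp
  have "rr n = (\<Sum>k=1..N. cw k * real (H (n - k))) / \<psi> ^ n" unfolding rr_def H_rec_real[OF n] ..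
  also have "\<dots> = (\<Sum>k=1..N. ww k * rr (n - k))"
    unfolding sum_divide_distrib
  proof (intro sum.cong refl)
    fix k assume k: "k \<in> {1..N}"
    then have "\<psi> ^ n = \<psi> ^ k * \<psi> ^ (n - k)" using n by (simp add: power_add[symmetric])
    then show "cw k * real (H (n - k)) / \<psi> ^ n = ww k * rr (n - k)"
      unfolding ww_def rr_def using psi0 by simp
  qed
  finally show ?thesis .
qed

lemma rr_conv: "\<exists>Lc. rr \<longlonglongrightarrow> Lc \<and> Lc > 0"
proof -
  obtain l where l: "rr \<longlonglongrightarrow> l" "Min (rr ` {N + 2 - N..<N + 2}) \<le> l"
    using avg_conv[OF N1 ww_nonneg ww_sum ww_1 ww_N rr_rec, of "N + 2"] by auto
  have "Min (rr ` {N + 2 - N..<N + 2}) > 0"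
  proof (subst Min_gr_iff)
    show "\<forall>a\<in>rr ` {N + 2 - N..<N + 2}. 0 < a"
    proof
      fix a assume "a \<in> rr ` {N + 2 - N..<N + 2}"
      then obtain i where "i \<ge> 2" "a = rr i" by auto
      then show "0 < a" unfolding rr_def using H_pos[of i] psi_props by simp
    qed
  qed (use N1 in auto)
  then show ?thesis using l by auto
qed

definition Lc :: real where "Lc = (SOME l. rr \<longlonglongrightarrow> l \<and> l > 0)"

lemma Lc: "rr \<longlonglongrightarrow> Lc" "Lc > 0"
  using someI_ex[OF rr_conv] unfolding Lc_def by auto

fun dt :: "nat list \<Rightarrow> real" where
  "dt [] = 0"
| "dt (x # xs) = real x + dt xs / \<psi>"

lemma evp_lim: "(\<lambda>j. real (evp p j) / \<psi> ^ (j + length p)) \<longlonglongrightarrow> Lc * dt p"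
proof (induction p)
  case Nil then show ?case by simp
next
  case (Cons x xs)
  have psi0: "\<psi> > 0" using psi_props by simp
  have eq: "real (evp (x # xs) j) / \<psi> ^ (j + length (x # xs))
      = real x * rr (j + Suc (length xs)) + (real (evp xs j) / \<psi> ^ (j + length xs)) / \<psi>" for j
  proof -
    have "real (evp (x # xs) j) = real x * real (H (j + Suc (length xs))) + real (evp xs j)"
      by (simp add: add.commute)
    moreover have "\<psi> ^ (j + length (x # xs)) = \<psi> ^ (j + length xs) * \<psi>" by simp
    ultimately show ?thesis unfolding rr_def using psi0
      by (simp add: add_divide_distrib divide_divide_eq_left ac_simps)
  qed
  have 1: "(\<lambda>j. rr (j + Suc (length xs))) \<longlonglongrightarrow> Lc"
    using LIMSEQ_ignore_initial_segment[OF Lc(1)] .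
  have "(\<lambda>j. real x * rr (j + Suc (length xs)) + (real (evp xs j) / \<psi> ^ (j + length xs)) / \<psi>)
      \<longlonglongrightarrow> real x * Lc + (Lc * dt xs) / \<psi>"
    by (intro tendsto_intros 1 Cons.IH) (use psi0 in simp)
  then show ?case unfolding eq by (simp add: algebra_simps)
qed

lemma dotH_dt: "dotH L b = dt b"
proof (induction b)
  case Nil then show ?case by (simp add: dotH_def)
next
  case (Cons x xs)
  define l where "l = length xs"
  define g where "g = (\<lambda>k. real ((x # xs) ! (k - 1)) * thetaR L ^ (k - 1))"
  have "dotH L (x # xs) = (\<Sum>k=1..Suc l. g k)" unfolding dotH_def g_def l_def by simp
  also have "\<dots> = g 1 + (\<Sum>k=Suc 1..Suc l. g k)" by (rule sum.atLeast_Suc_atMost) simp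
  also have "(\<Sum>k=Suc 1..Suc l. g k) = (\<Sum>k=1..l. g (Suc k))" by (rule sum.shift_bounds_cl_Suc_ivl)
  also have "\<dots> = thetaR L * (\<Sum>k=1..l. real (xs ! (k - 1)) * thetaR L ^ (k - 1))"
    unfolding g_def sum_distrib_left
    by (intro sum.cong) (auto simp: nth_Cons' power_eq_if)
  also have "(\<Sum>k=1..l. real (xs ! (k - 1)) * thetaR L ^ (k - 1)) = dt xs"
    using Cons unfolding dotH_def l_def by simp
  finally show ?case unfolding g_def thetaR_def by (simp add: divide_inverse mult.commute)
qed

lemma dt_zeros: "dt (xs @ replicate n 0) = dt xs"
proof (induction xs)
  case Nil
  have "dt (replicate n 0) = 0" by (induction n) auto
  then show ?case by simp
qed simp

lemma dt_pad: "dt (pad s p) = dt p"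
  unfolding pad_def by (simp add: dt_zeros)

end



lemma inner_step:
  fixes b Lc Km z u v e A U :: real and M :: nat
  assumes b: "1 < b" and Lc: "0 < Lc" and Km: "Km = Lc * b ^ M * b powr z"
    and z: "u + e < z" "z < v - e"
    and A: "A / b ^ M < Lc * (b powr u * b powr e)"
    and U: "Lc * (b powr v / b powr e) < U / b ^ M"
  shows "A < Km" "Km < U"
proof -
  have bM: "b ^ M > 0" using b by simp
  have "b powr (u + e) < b powr z" using z b by simp
  then have "b powr u * b powr e < b powr z" by (simp add: powr_add)
  then have "Lc * (b powr u * b powr e) < Lc * b powr z" using Lc by (rule mult_strict_left_mono)
  then have "Lc * (b powr u * b powr e) * b ^ M < Lc * b powr z * b ^ M"
    using bM by (rule mult_strict_right_mono)
  moreover have "A < Lc * (b powr u * b powr e) * b ^ M" using A bM by (simp only: pos_divide_less_eq)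
  ultimately have "A < Lc * b powr z * b ^ M" by (rule less_trans[rotated])
  moreover have Km': "Km = Lc * b powr z * b ^ M" unfolding Km by (simp only: mult.assoc mult.commute[of "b ^ M"])
  ultimately show "A < Km" by (simp only:)
  have "b powr z < b powr (v - e)" using z b by simp
  then have "b powr z < b powr v / b powr e" by (simp add: powr_diff)
  then have "Lc * b powr z < Lc * (b powr v / b powr e)" using Lc by (rule mult_strict_left_mono)
  then have "Lc * b powr z * b ^ M < Lc * (b powr v / b powr e) * b ^ M"
    using bM by (rule mult_strict_right_mono)
  moreover have "Lc * (b powr v / b powr e) * b ^ M < U" using U bM by (simp only: pos_less_divide_eq)
  ultimately have "Lc * b powr z * b ^ M < U" by (rule less_trans)
  then show "Km < U" using Km' by (simp only:)
qed

lemma outer_step: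
  fixes b Lc Km z u v e A U :: real and M :: nat
  assumes b: "1 < b" and Lc: "0 < Lc" and Km: "Km = Lc * b ^ M * b powr z"
    and A: "Lc * (b powr u / b powr e) < A / b ^ M"
    and U: "U / b ^ M < Lc * (b powr v * b powr e)"
    and AK: "A \<le> Km" and KU: "Km < U"
  shows "u - e < z" "z < v + e"
proof -
  have bM: "b ^ M > 0" using b by simp
  have "Lc * (b powr u / b powr e) * b ^ M < A" using A bM by (simp only: pos_less_divide_eq)
  then have "Lc * (b powr u / b powr e) * b ^ M < Km" using AK by (rule less_le_trans)
  moreover have Km': "Km = Lc * b powr z * b ^ M" unfolding Km by (simp only: mult.assoc mult.commute[of "b ^ M"])
  ultimately have "Lc * (b powr u / b powr e) * b ^ M < Lc * b powr z * b ^ M" by (simp only:)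
  then have "Lc * (b powr u / b powr e) < Lc * b powr z" using mult_right_less_imp_less less_imp_le[OF bM] by blast
  then have "b powr u / b powr e < b powr z" using mult_left_less_imp_less less_imp_le[OF Lc] by blast
  then have "b powr (u - e) < b powr z" by (simp add: powr_diff)
  then show "u - e < z" using b by simp
  have "Lc * b powr z * b ^ M < Lc * (b powr v * b powr e) * b ^ M"
  proof -
    have "U < Lc * (b powr v * b powr e) * b ^ M" using U bM by (simp only: pos_divide_less_eq)
    then have "Km < Lc * (b powr v * b powr e) * b ^ M" using KU by (rule less_trans[rotated])
    then show ?thesis using Km' by (simp only:)
  qed
  then have "Lc * b powr z < Lc * (b powr v * b powr e)" using mult_right_less_imp_less less_imp_le[OF bM] by blast
  then have "b powr z < b powr v * b powr e" using mult_left_less_imp_less less_imp_le[OF Lc] by blast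
  then have "b powr z < b powr (v + e)" by (simp add: powr_add)
  then show "z < v + e" using b by simp
qed

context Lsys
begin

lemma lim_A: "p \<in> Bs s \<Longrightarrow> (\<lambda>M. real (evp p (M - s)) / \<psi> ^ M) \<longlonglongrightarrow> Lc * dt p"
proof -
  assume p: "p \<in> Bs s"
  then have lp: "length p = s" unfolding Bs_def by simp
  have "(\<lambda>j. real (evp p ((j + s) - s)) / \<psi> ^ (j + s)) \<longlonglongrightarrow> Lc * dt p"
    using evp_lim[of p] lp by simp
  then show ?thesis by (rule LIMSEQ_offset)
qed

lemma lim_H: "(\<lambda>M. real (H M) / \<psi> ^ M) \<longlonglongrightarrow> Lc"
  using Lc(1) unfolding rr_def .

lemma lim_H1: "(\<lambda>M. real (H (Suc M)) / \<psi> ^ M) \<longlonglongrightarrow> Lc * \<psi>"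
proof -
  have "(\<lambda>M. rr (Suc M) * \<psi>) \<longlonglongrightarrow> Lc * \<psi>"
    by (intro tendsto_intros LIMSEQ_Suc Lc(1))
  moreover have "rr (Suc M) * \<psi> = real (H (Suc M)) / \<psi> ^ M" for M
    unfolding rr_def using psi0 by (simp add: field_simps)
  ultimately show ?thesis by simp
qed

lemma dt_excl: "1 \<le> s \<Longrightarrow> dt (exclusive_block L s) = \<psi>"
proof -
  assume s1: "1 \<le> s"
  obtain l where l: "s \<le> l" "length (exclusive_block L s) = l"
      "\<forall>j. evp (exclusive_block L s) j = H (Suc (l + j))"
    using excl_value[OF s1] by blast
  have a: "(\<lambda>j. real (evp (exclusive_block L s) j) / \<psi> ^ (j + l)) \<longlonglongrightarrow> Lc * dt (exclusive_block L s)"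
    using evp_lim[of "exclusive_block L s"] l(2) by simp
  have "(\<lambda>j. real (H (Suc (j + l))) / \<psi> ^ (j + l)) \<longlonglongrightarrow> Lc * \<psi>"
    using LIMSEQ_ignore_initial_segment[OF lim_H1, of l] by simp
  moreover have "(\<lambda>j. real (evp (exclusive_block L s) j) / \<psi> ^ (j + l)) = (\<lambda>j. real (H (Suc (j + l))) / \<psi> ^ (j + l))"
  proof
    fix j show "real (evp (exclusive_block L s) j) / \<psi> ^ (j + l) = real (H (Suc (j + l))) / \<psi> ^ (j + l)"
      using l(3) by (simp add: add.commute)
  qed
  ultimately have "(\<lambda>j. real (evp (exclusive_block L s) j) / \<psi> ^ (j + l)) \<longlonglongrightarrow> Lc * \<psi>" by simp
  then have "Lc * dt (exclusive_block L s) = Lc * \<psi>" using a LIMSEQ_unique by blast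
  then show ?thesis using Lc(2) by simp
qed

lemma lim_U:
  assumes s1: "1 \<le> s" and p: "p \<in> Bs s"
  shows "(\<lambda>M. real (Up s p M) / \<psi> ^ M) \<longlonglongrightarrow> Lc * dotH L (succ_block L s (pad s p))"
proof (cases "p = tp s")
  case True
  then have "dotH L (succ_block L s (pad s p)) = \<psi>"
    using succ_pad[OF s1 p] dt_excl[OF s1] dotH_dt by simp
  then show ?thesis unfolding Up_def using True lim_H1 by simp
next
  case False
  have "dotH L (succ_block L s (pad s p)) = dt (sucp s p)"
    using succ_pad[OF s1 p] False dotH_dt dt_pad by simp
  then show ?thesis unfolding Up_def using False lim_A[OF sucp(1)[OF s1 p False]] by simp
qed

lemma D_bounds:
  assumes s1: "1 \<le> s" and p: "p \<in> Bs s"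
  shows "1 \<le> dt p" "dt p \<le> dotH L (succ_block L s (pad s p))" "dotH L (succ_block L s (pad s p)) \<le> \<psi>"
proof -
  define D2 where "D2 = dotH L (succ_block L s (pad s p))"
  have ev: "\<exists>N0. \<forall>M\<ge>N0. s \<le> M" by auto
  have "Lc \<le> Lc * dt p"
  proof (rule LIMSEQ_le[OF lim_H lim_A[OF p]])
    show "\<exists>N0. \<forall>M\<ge>N0. real (H M) / \<psi> ^ M \<le> real (evp p (M - s)) / \<psi> ^ M"
      using A_ge[OF s1 p] psi0 by (intro exI[of _ s] allI impI divide_right_mono) auto
  qed
  then show "1 \<le> dt p" using Lc(2) by simp
  have "Lc * dt p \<le> Lc * D2"
  proof (rule LIMSEQ_le[OF lim_A[OF p] lim_U[OF s1 p, folded D2_def]])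
    show "\<exists>N0. \<forall>M\<ge>N0. real (evp p (M - s)) / \<psi> ^ M \<le> real (Up s p M) / \<psi> ^ M"
      using A_lt_Up[OF s1 p] psi0 by (intro exI[of _ s] allI impI divide_right_mono) (auto simp: less_imp_le)
  qed
  then show "dt p \<le> D2" using Lc(2) by simp
  have "Lc * D2 \<le> Lc * \<psi>"
  proof (rule LIMSEQ_le[OF lim_U[OF s1 p, folded D2_def] lim_H1])
    show "\<exists>N0. \<forall>M\<ge>N0. real (Up s p M) / \<psi> ^ M \<le> real (H (Suc M)) / \<psi> ^ M"
      using Up_le[OF s1 p] psi0 by (intro exI[of _ s] allI impI divide_right_mono) auto
  qed
  then show "D2 \<le> \<psi>" using Lc(2) by simp
qed

lemma window:
  fixes K :: "nat \<Rightarrow> nat" and g \<delta> \<epsilon> :: real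
  assumes s1: "1 \<le> s" and p: "p \<in> Bs s" and K0: "\<And>k. 0 < K k"
    and err: "(\<lambda>k. log \<psi> (real (K k) / Lc) - (real k * g + \<delta>)) \<longlonglongrightarrow> 0"
    and g0: "0 < g" and e0: "0 < \<epsilon>" and e1: "\<epsilon> \<le> 1"
  defines "u \<equiv> log \<psi> (dt p)" and "v \<equiv> log \<psi> (dotH L (succ_block L s (pad s p)))"
  shows "\<exists>k0. \<forall>k \<ge> k0.
     (frac (real k * g + (\<delta> - u - \<epsilon>)) < v - u - 2 * \<epsilon> \<longrightarrow> LB L s (K k) = Some (pad s p)) \<and>
     (v - u + 2 * \<epsilon> \<le> 1 \<longrightarrow> LB L s (K k) = Some (pad s p) \<longrightarrow>
        frac (real k * g + (\<delta> - u + \<epsilon>)) < v - u + 2 * \<epsilon>)"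
proof -
  define D1 where "D1 = dt p"
  define D2 where "D2 = dotH L (succ_block L s (pad s p))"
  have DB: "1 \<le> D1" "D1 \<le> D2" "D2 \<le> \<psi>" using D_bounds[OF s1 p] unfolding D1_def D2_def by auto
  have psi1: "1 < \<psi>" using psi_props by simp
  have D1p: "0 < D1" and D2p: "0 < D2" using DB by auto
  have u0: "0 \<le> u" unfolding u_def D1_def[symmetric] using DB psi1 by simp
  have v1: "v \<le> 1" unfolding v_def D2_def[symmetric] using DB psi1
    by (metis log_eq_one log_le_cancel_iff D2p less_irrefl less_trans zero_less_one)
  have uv: "u \<le> v" unfolding u_def v_def D1_def[symmetric] D2_def[symmetric] using DB psi1 D1p D2p by simp
  have D1u: "\<psi> powr u = D1" unfolding u_def D1_def[symmetric] using psi1 D1p by simp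
  have D2v: "\<psi> powr v = D2" unfolding v_def D2_def[symmetric] using psi1 D2p by simp
  define e' where "e' = \<epsilon> / 2"
  have e'0: "0 < e'" unfolding e'_def using e0 by simp
  have q1: "1 < \<psi> powr e'" using psi1 e'0 by (metis powr_less_cancel_iff powr_zero_eq_one less_trans zero_less_one)
  define A where "A = (\<lambda>M. real (evp p (M - s)))"
  define U where "U = (\<lambda>M. real (Up s p M))"
  have limA: "(\<lambda>M. A M / \<psi> ^ M) \<longlonglongrightarrow> Lc * (\<psi> powr u)" unfolding A_def D1u D1_def by (rule lim_A[OF p])
  have limU: "(\<lambda>M. U M / \<psi> ^ M) \<longlonglongrightarrow> Lc * (\<psi> powr v)" unfolding U_def D2v D2_def by (rule lim_U[OF s1 p])
  have pu: "0 < \<psi> powr u" "0 < \<psi> powr v" using psi1 by auto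
  have lt1: "Lc * (\<psi> powr u / \<psi> powr e') < Lc * \<psi> powr u" "Lc * \<psi> powr u < Lc * (\<psi> powr u * \<psi> powr e')"
    using Lc(2) pu q1 by (simp_all add: divide_less_eq)
  have lt2: "Lc * (\<psi> powr v / \<psi> powr e') < Lc * \<psi> powr v" "Lc * \<psi> powr v < Lc * (\<psi> powr v * \<psi> powr e')"
    using Lc(2) pu q1 by (simp_all add: divide_less_eq)
  have "eventually (\<lambda>M. A M / \<psi> ^ M < Lc * (\<psi> powr u * \<psi> powr e') \<and> Lc * (\<psi> powr u / \<psi> powr e') < A M / \<psi> ^ M
      \<and> U M / \<psi> ^ M < Lc * (\<psi> powr v * \<psi> powr e') \<and> Lc * (\<psi> powr v / \<psi> powr e') < U M / \<psi> ^ M) sequentially"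
    using order_tendstoD(2)[OF limA lt1(2)] order_tendstoD(1)[OF limA lt1(1)]
      order_tendstoD(2)[OF limU lt2(2)] order_tendstoD(1)[OF limU lt2(1)]
    by (simp add: eventually_conj_iff)
  then obtain M0 where M0: "\<And>M. M \<ge> M0 \<Longrightarrow> A M / \<psi> ^ M < Lc * (\<psi> powr u * \<psi> powr e') \<and> Lc * (\<psi> powr u / \<psi> powr e') < A M / \<psi> ^ M
      \<and> U M / \<psi> ^ M < Lc * (\<psi> powr v * \<psi> powr e') \<and> Lc * (\<psi> powr v / \<psi> powr e') < U M / \<psi> ^ M"
    unfolding eventually_sequentially by blast
  define M1 where "M1 = max M0 s"
  obtain k1 where k1: "\<And>k. k \<ge> k1 \<Longrightarrow> \<bar>log \<psi> (real (K k) / Lc) - (real k * g + \<delta>)\<bar> < e'"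
    using LIMSEQ_D[OF err e'0] by auto
  define C where "C = max (real M1 + 3) (log \<psi> (real (H M1) / Lc) + 1)"
  define k2 where "k2 = nat \<lceil>(C - \<delta>) / g\<rceil>"
  have k2: "C \<le> real k * g + \<delta>" if "k \<ge> k2" for k
  proof -
    have "(C - \<delta>) / g \<le> real k" using that unfolding k2_def by linarith
    then show ?thesis using g0 by (simp add: field_simps)
  qed
  show ?thesis
  proof (intro exI[of _ "max k1 k2"] allI impI conjI)
    fix k assume kk: "max k1 k2 \<le> k"
    define x where "x = log \<psi> (real (K k) / Lc)"
    define y where "y = real k * g + \<delta>"
    have xy: "\<bar>x - y\<bar> < e'" using k1 kk unfolding x_def y_def by simp
    have yC: "C \<le> y" using k2 kk unfolding y_def by simp
    have Kp: "0 < real (K k) / Lc" using K0[of k] Lc(2) by simp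
    have Km: "real (K k) = Lc * \<psi> ^ M * \<psi> powr (x - real M)" for M
    proof -
      have "\<psi> powr x = \<psi> powr (x - real M) * \<psi> powr (real M)" by (simp add: powr_add[symmetric])
      also have "\<psi> powr (real M) = \<psi> ^ M" using psi1 by (simp add: powr_realpow)
      finally have "\<psi> powr x = \<psi> powr (x - real M) * \<psi> ^ M" .
      moreover have "\<psi> powr x = real (K k) / Lc" unfolding x_def using psi1 Kp by simp
      ultimately show ?thesis using Lc(2) by (simp add: field_simps)
    qed
    {
      assume F: "frac (real k * g + (\<delta> - u - \<epsilon>)) < v - u - 2 * \<epsilon>"
      define w where "w = y - u - \<epsilon>"
      have ww: "real k * g + (\<delta> - u - \<epsilon>) = w" unfolding w_def y_def by simp
      have wM1: "real M1 + 1 \<le> w" unfolding w_def using yC v1 uv e1 unfolding C_def by linarith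
      define M where "M = nat \<lfloor>w\<rfloor>"
      have fl0: "0 \<le> \<lfloor>w\<rfloor>" using wM1 by simp
      have rM: "real M = of_int \<lfloor>w\<rfloor>" unfolding M_def using fl0 by simp
      have fw: "frac w = w - real M" unfolding rM frac_def by simp
      have Mw: "real M \<le> w" "w - real M < v - u - 2 * \<epsilon>" using fw F ww rM by (auto simp: of_int_floor_le)
      have MM1: "M1 \<le> M"
      proof -
        have "w < real M + 1" using rM by linarith
        then show ?thesis using wM1 by simp
      qed
      have sM: "s \<le> M" "M0 \<le> M" using MM1 unfolding M1_def by auto
      have z1: "u + e' < x - real M" using xy Mw unfolding w_def e'_def by linarith
      have z2: "x - real M < v - e'" using xy Mw unfolding w_def e'_def by linarith
      have bnd: "A M / \<psi> ^ M < Lc * (\<psi> powr u * \<psi> powr e')" "Lc * (\<psi> powr v / \<psi> powr e') < U M / \<psi> ^ M"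
        using M0[OF sM(2)] by auto
      have "A M < real (K k)" "real (K k) < U M"
        using inner_step[OF psi1 Lc(2) Km[of M] z1 z2 bnd] by auto
      then have "evp p (M - s) \<le> K k" "K k < Up s p M" unfolding A_def U_def by auto
      then show "LB L s (K k) = Some (pad s p)" using block_inner[OF s1 p sM(1)] by simp
    }
    {
      assume V: "v - u + 2 * \<epsilon> \<le> 1" and LBk: "LB L s (K k) = Some (pad s p)"
      have K1: "1 \<le> K k" using K0[of k] by simp
      obtain M where M: "s \<le> M" "H M \<le> K k" "K k < H (Suc M)" "evp p (M - s) \<le> K k" "K k < Up s p M"
        using block_outer[OF s1 p K1 LBk] by blast
      have KH: "real (H M1) < real (K k)"
      proof -
        have "1 \<le> M1" using s1 unfolding M1_def by simp
        then have "1 \<le> H M1" by (rule H_pos)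
        then have HM1p: "0 < real (H M1) / Lc" using Lc(2) by simp
        have "log \<psi> (real (H M1) / Lc) < x" using xy yC unfolding C_def e'_def using e1 by linarith
        then have "\<psi> powr log \<psi> (real (H M1) / Lc) < \<psi> powr x" using psi1 by simp
        then have "real (H M1) / Lc < real (K k) / Lc" unfolding x_def using psi1 HM1p Kp by simp
        then show ?thesis using Lc(2) by (simp add: divide_strict_right_mono_neg divide_less_cancel)
      qed
      have MM1: "M1 \<le> M"
      proof (rule ccontr)
        assume "\<not> M1 \<le> M"
        then have "Suc M \<le> M1" by simp
        then have "H (Suc M) \<le> H M1" using H_mono[of "Suc M" M1] by simp
        then show False using KH M(3) by simp
      qed
      have sM: "M0 \<le> M" using MM1 unfolding M1_def by auto
      have bnd: "Lc * (\<psi> powr u / \<psi> powr e') < A M / \<psi> ^ M" "U M / \<psi> ^ M < Lc * (\<psi> powr v * \<psi> powr e')"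
        using M0[OF sM] by auto
      have AK: "A M \<le> real (K k)" and KU: "real (K k) < U M" using M(4,5) unfolding A_def U_def by auto
      have z: "u - e' < x - real M" "x - real M < v + e'"
        using outer_step[OF psi1 Lc(2) Km[of M] bnd AK KU] by auto
      define w' where "w' = y - u + \<epsilon> - real M"
      have w'b: "0 \<le> w'" "w' < v - u + 2 * \<epsilon>" using z xy unfolding w'_def e'_def by linarith+
      have "frac (real k * g + (\<delta> - u + \<epsilon>)) = w'"
        unfolding frac_unique_iff
      proof (intro conjI)
        have "real k * g + (\<delta> - u + \<epsilon>) - w' = of_int (int M)" unfolding w'_def y_def by simp
        then show "real k * g + (\<delta> - u + \<epsilon>) - w' \<in> \<int>" by (metis Ints_of_int)
        show "0 \<le> w'" by (rule w'b(1))
        show "w' < 1" using w'b V by linarith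
      qed
      then show "frac (real k * g + (\<delta> - u + \<epsilon>)) < v - u + 2 * \<epsilon>" using w'b by simp
    }
  qed
qed

lemma count_le:
  assumes "\<And>k. k0 \<le> k \<Longrightarrow> PP k \<Longrightarrow> QQ k"
  shows "card {k \<in> {1..n::nat}. PP k} \<le> card {k \<in> {1..n}. QQ k} + k0"
proof -
  have "{k \<in> {1..n}. PP k} \<subseteq> {k \<in> {1..n}. QQ k} \<union> {..<k0}" using assms by force
  then have "card {k \<in> {1..n}. PP k} \<le> card ({k \<in> {1..n}. QQ k} \<union> {..<k0})" by (intro card_mono) auto
  also have "\<dots> \<le> card {k \<in> {1..n}. QQ k} + card {..<k0}" by (rule card_Un_le)
  finally show ?thesis by simp
qed

lemma main:
  fixes K :: "nat \<Rightarrow> nat" and \<alpha> \<beta> :: real and s :: nat and b :: "nat list"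
  assumes K0: "\<And>n. K n > 0" and al: "\<alpha> > 0" and be: "\<beta> > 0"
    and lim: "(\<lambda>n. real (K n) / (\<alpha> * \<beta> ^ n)) \<longlonglongrightarrow> 1"
    and irr: "log \<psi> \<beta> \<notin> \<rat>" and s1: "s \<ge> 1" and b: "b \<in> Hblocks L s"
  shows "(\<lambda>n. real (card {k \<in> {1..n}. LB L s (K k) = Some b}) / real n)
           \<longlonglongrightarrow> log \<psi> (dotH L (succ_block L s b) / dotH L b)"
proof -
  obtain p where p: "p \<in> Bs s" "b = pad s p" using b Hblocks_char[OF s1] by auto
  define D1 where "D1 = dt p"
  define D2 where "D2 = dotH L (succ_block L s (pad s p))"
  have DB: "1 \<le> D1" "D1 \<le> D2" "D2 \<le> \<psi>" using D_bounds[OF s1 p(1)] unfolding D1_def D2_def by auto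
  have psi1: "1 < \<psi>" using psi_props by simp
  define u where "u = log \<psi> D1"
  define v where "v = log \<psi> D2"
  have u0: "0 \<le> u" unfolding u_def using DB psi1 by simp
  have v1: "v \<le> 1" unfolding v_def using DB psi1
    by (metis log_eq_one log_le_cancel_iff less_le_trans zero_less_one less_irrefl less_trans)
  have uv: "u \<le> v" unfolding u_def v_def using DB psi1 by simp
  have target: "log \<psi> (dotH L (succ_block L s b) / dotH L b) = v - u"
  proof -
    have "dotH L b = D1" unfolding p(2) D1_def using dotH_dt dt_pad by simp
    moreover have "dotH L (succ_block L s b) = D2" unfolding p(2) D2_def ..
    ultimately show ?thesis unfolding u_def v_def using DB by (simp add: log_divide)
  qed
  have b1: "\<beta> > 1"
  proof (rule ccontr)
    assume "\<not> \<beta> > 1"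
    then consider "\<beta> = 1" | "\<beta> < 1" by linarith
    then show False
    proof cases
      case 1 then show False using irr by simp
    next
      case 2
      have e1: "eventually (\<lambda>n. real (K n) / (\<alpha> * \<beta> ^ n) < 2) sequentially"
        using order_tendstoD(2)[OF lim] by simp
      have "(\<lambda>n. \<beta> ^ n) \<longlonglongrightarrow> 0" using 2 be by (intro LIMSEQ_power_zero) simp
      then have e2: "eventually (\<lambda>n. \<beta> ^ n < 1 / (2 * \<alpha>)) sequentially"
        using al by (intro order_tendstoD(2)) auto
      obtain n where n: "real (K n) / (\<alpha> * \<beta> ^ n) < 2" "\<beta> ^ n < 1 / (2 * \<alpha>)"
        using eventually_happens'[OF _ eventually_conj[OF e1 e2]] by auto
      have pos: "0 < \<alpha> * \<beta> ^ n" using al be by simp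
      have "1 \<le> real (K n)" using K0[of n] by simp
      moreover have "real (K n) < 2 * (\<alpha> * \<beta> ^ n)" using n(1) pos by (simp add: divide_less_eq)
      ultimately have "1 < 2 * (\<alpha> * \<beta> ^ n)" by linarith
      moreover have "2 * (\<alpha> * \<beta> ^ n) < 1" using n(2) al by (simp add: field_simps)
      ultimately show False by simp
    qed
  qed
  define g where "g = log \<psi> \<beta>"
  have g0: "0 < g" unfolding g_def using b1 psi1 by simp
  have girr: "g \<notin> \<rat>" unfolding g_def by (rule irr)
  define \<delta> where "\<delta> = log \<psi> (\<alpha> / Lc)"
  have err: "(\<lambda>k. log \<psi> (real (K k) / Lc) - (real k * g + \<delta>)) \<longlonglongrightarrow> 0"
  proof -
    have "(\<lambda>k. log \<psi> (real (K k) / (\<alpha> * \<beta> ^ k))) \<longlonglongrightarrow> log \<psi> 1"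
      using psi1 by (intro tendsto_log lim tendsto_const) auto
    moreover have "log \<psi> (real (K k) / (\<alpha> * \<beta> ^ k)) = log \<psi> (real (K k) / Lc) - (real k * g + \<delta>)" for k
    proof -
      have Kp: "0 < real (K k) / Lc" using K0[of k] Lc(2) by simp
      have ap: "0 < \<alpha> / Lc" "0 < \<beta> ^ k" using al be Lc(2) by auto
      have pos2: "0 < (\<alpha> / Lc) * \<beta> ^ k" using ap by (intro mult_pos_pos)
      have eq: "real (K k) / (\<alpha> * \<beta> ^ k) = (real (K k) / Lc) / ((\<alpha> / Lc) * \<beta> ^ k)"
        using Lc(2) by (simp add: field_simps)
      have "log \<psi> (real (K k) / (\<alpha> * \<beta> ^ k)) = log \<psi> ((real (K k) / Lc) / ((\<alpha> / Lc) * \<beta> ^ k))"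
        by (simp only: eq)
      also have "\<dots> = log \<psi> (real (K k) / Lc) - log \<psi> ((\<alpha> / Lc) * \<beta> ^ k)"
        by (rule log_divide_pos[OF Kp pos2])
      finally have "log \<psi> (real (K k) / (\<alpha> * \<beta> ^ k)) = log \<psi> (real (K k) / Lc) - log \<psi> ((\<alpha> / Lc) * \<beta> ^ k)" .
      also have "log \<psi> ((\<alpha> / Lc) * \<beta> ^ k) = \<delta> + real k * g"
      proof -
        have "log \<psi> ((\<alpha> / Lc) * \<beta> ^ k) = log \<psi> (\<alpha> / Lc) + log \<psi> (\<beta> ^ k)" by (rule log_mult_pos[OF ap])
        moreover have "log \<psi> (\<beta> ^ k) = real k * log \<psi> \<beta>" using be by (intro log_nat_power) simp
        ultimately show ?thesis unfolding \<delta>_def g_def by simp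
      qed
      finally show ?thesis by simp
    qed
    ultimately show ?thesis by simp
  qed
  define F where "F = (\<lambda>n. card {k \<in> {1..n}. LB L s (K k) = Some b})"
  have Fle: "F n \<le> n" for n
    unfolding F_def by (rule order_trans[OF card_mono[of "{1..n}"]]) auto
  have "(\<lambda>n. real (F n) / real n) \<longlonglongrightarrow> v - u"
  proof (rule order_tendstoI)
    fix a assume a: "a < v - u"
    show "eventually (\<lambda>n. a < real (F n) / real n) sequentially"
    proof (cases "a < 0")
      case True
      then show ?thesis by (intro always_eventually allI) (simp add: less_le_trans[OF True])
    next
      case False
      define \<epsilon> where "\<epsilon> = (v - u - a) / 3"
      have e3: "3 * \<epsilon> = v - u - a" unfolding \<epsilon>_def by simp
      have e0: "0 < \<epsilon>" and e1: "\<epsilon> \<le> 1" using e3 a False v1 u0 by linarith+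
      define c where "c = v - u - 2 * \<epsilon>"
      have c01: "0 \<le> c" "c \<le> 1" "a < c" unfolding c_def using e3 a False v1 u0 by linarith+
      obtain k0 where k0: "\<And>k. k \<ge> k0 \<Longrightarrow> frac (real k * g + (\<delta> - u - \<epsilon>)) < c \<longrightarrow> LB L s (K k) = Some b"
        using window[OF s1 p(1) K0 err g0 e0 e1] unfolding u_def v_def D1_def D2_def c_def p(2) by blast
      have cnt: "Gc g (\<delta> - u - \<epsilon>) c n \<le> F n + k0" for n
        unfolding Gc_def F_def by (rule count_le) (use k0 in auto)
      have "(\<lambda>n. real (Gc g (\<delta> - u - \<epsilon>) c n) / real n - real k0 / real n) \<longlonglongrightarrow> c - 0"
        by (intro tendsto_diff equidist[OF girr c01(1,2)] lim_const_over_n)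
      then have "eventually (\<lambda>n. a < real (Gc g (\<delta> - u - \<epsilon>) c n) / real n - real k0 / real n) sequentially"
        using c01(3) by (intro order_tendstoD(1)) auto
      then show ?thesis
      proof (rule eventually_mono)
        fix n assume h: "a < real (Gc g (\<delta> - u - \<epsilon>) c n) / real n - real k0 / real n"
        have "real (Gc g (\<delta> - u - \<epsilon>) c n) / real n - real k0 / real n \<le> real (F n) / real n"
        proof -
          have "real (Gc g (\<delta> - u - \<epsilon>) c n) - real k0 \<le> real (F n)" using cnt[of n] by linarith
          then have "(real (Gc g (\<delta> - u - \<epsilon>) c n) - real k0) / real n \<le> real (F n) / real n"
            by (intro divide_right_mono) auto
          then show ?thesis by (simp add: diff_divide_distrib)
        qed
        then show "a < real (F n) / real n" using h by linarith
      qed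
    qed
  next
    fix a assume a: "a > v - u"
    show "eventually (\<lambda>n. real (F n) / real n < a) sequentially"
    proof (cases "a > 1")
      case True
      have "real (F n) / real n < a" if "n > 0" for n
      proof -
        have "real (F n) / real n \<le> 1" using Fle[of n] that by simp
        then show ?thesis using True by simp
      qed
      then show ?thesis using eventually_gt_at_top[of 0] by (rule eventually_mono[rotated])
    next
      case False
      define \<epsilon> where "\<epsilon> = (a - (v - u)) / 3"
      have e3: "3 * \<epsilon> = a - (v - u)" unfolding \<epsilon>_def by simp
      have e0: "0 < \<epsilon>" and e1: "\<epsilon> \<le> 1" using e3 a False v1 u0 uv by linarith+
      define c where "c = v - u + 2 * \<epsilon>"
      have c01: "0 \<le> c" "c \<le> 1" "c < a" unfolding c_def using e3 a False v1 u0 uv by linarith+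
      obtain k0 where k0: "\<And>k. k \<ge> k0 \<Longrightarrow> LB L s (K k) = Some b \<longrightarrow> frac (real k * g + (\<delta> - u + \<epsilon>)) < c"
        using window[OF s1 p(1) K0 err g0 e0 e1] c01(2) unfolding u_def v_def D1_def D2_def c_def p(2) by blast
      have cnt: "F n \<le> Gc g (\<delta> - u + \<epsilon>) c n + k0" for n
        unfolding Gc_def F_def by (rule count_le) (use k0 in auto)
      have "(\<lambda>n. real (Gc g (\<delta> - u + \<epsilon>) c n) / real n + real k0 / real n) \<longlonglongrightarrow> c + 0"
        by (intro tendsto_add equidist[OF girr c01(1,2)] lim_const_over_n)
      then have "eventually (\<lambda>n. real (Gc g (\<delta> - u + \<epsilon>) c n) / real n + real k0 / real n < a) sequentially"
        using c01(3) by (intro order_tendstoD(2)) auto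
      then show ?thesis
      proof (rule eventually_mono)
        fix n assume h: "real (Gc g (\<delta> - u + \<epsilon>) c n) / real n + real k0 / real n < a"
        have "real (F n) / real n \<le> real (Gc g (\<delta> - u + \<epsilon>) c n) / real n + real k0 / real n"
        proof -
          have "real (F n) \<le> real (Gc g (\<delta> - u + \<epsilon>) c n) + real k0" using cnt[of n] by linarith
          then have "real (F n) / real n \<le> (real (Gc g (\<delta> - u + \<epsilon>) c n) + real k0) / real n"
            by (intro divide_right_mono) auto
          then show ?thesis by (simp add: add_divide_distrib)
        qed
        then show "real (F n) / real n < a" using h by linarith
      qed
    qed
  qed
  then show ?thesis unfolding F_def target .
qed

end

theorem theorem6p9:
  fixes L :: "nat list" and K :: "nat \<Rightarrow> nat" and \<alpha> \<beta> :: real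
    and s :: nat and b :: "nat list"
  assumes "length L \<ge> 2" and "L ! 0 > 0"
    and "\<And>n. K n > 0"
    and "\<alpha> > 0" and "\<beta> > 0"
    and "(\<lambda>n. real (K n) / (\<alpha> * \<beta> ^ n)) \<longlonglongrightarrow> 1"
    and "log (psi L) \<beta> \<notin> \<rat>"
    and "s \<ge> 1"
    and "b \<in> Hblocks L s"
  shows "(\<lambda>n. real (card {k \<in> {1..n}. LB L s (K k) = Some b}) / real n)
           \<longlonglongrightarrow> log (psi L) (dotH L (succ_block L s b) / dotH L b)"
proof -
  interpret Lsys L using assms(1,2) by unfold_locales
  show ?thesis by (rule main[OF assms(3-9)])
qed


end
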